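(* Let $p\ge1$ and let $\mathbf X$ be a random variable with values in $\mathcal R^w_p(V)$ such that $\mathbb E|\langle\mathbf X_{0,T},f\rangle|<\infty$ for every $f\in T(V)$. Then: 1. (compensated moments) For every $k\ge1$ and nonempty words $\tau_1,\dots,\tau_k\in[d]^*$, with $\boldsymbol\tau=(\tau_1,\dots,\tau_k)$, $$\langle\kappa_{\mathbf X},e_{\tau_1}\sqcup\cdots\sqcup e_{\tau_k}\rangle=\sum_{\mathbf a\in\mathrm{Orp}(\boldsymbol\tau)}(-1)^{|\mathbf a|-1}\frac{\mathbf a!}{|\mathbf a|}\mu_{\mathbf X}(\mathbf a).$$ 2. (moment bijection) For every nonempty word $\tau\in[d]^*$, $$\langle\mu_{\mathbf X},e_\tau\rangle=\sum_{\mathbf a\in\mathrm{Orp}(\tau)}\frac{1}{|\mathbf a|!}\prod_{B\in\mathbf a}\langle\kappa_{\mathbf X},e_B\rangle,$$ where $\mathrm{Orp}(\tau)$ is the set of partitions of the positions of $\tau$ into intervals of consecutive positions and $e_B=e_{\tau(p_1)}\otimes\cdots\otimes e_{\tau(p_r)}$ for a block $B=\{p_1<\dots<p_r\}$. 3. (independence) Let $I,J\subseteq[d]$ and suppose the joint law of $(\mathbf X|_I,\mathbf X|_J)$ is determined by the mixed moments $\{\mathbb E[\langle\mathbf X_{0,T},e_{\tau_1}\rangle\langle\mathbf X_{0,T},e_{\tau_2}\rangle]:\tau_1\in I^*\cup\{()\},\tau_2\in J^*\cup\{()\}\}$, in the sense that any pair of random variables with values in $\mathbb R^{I^*}\times\mathbb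 R^{J^*}$ having the same (finite) mixed moments of this form has the same joint law. Then $\mathbf X|_I$ and $\mathbf X|_J$ are independent if and only if $\langle\kappa_{\mathbf X},e_{\tau_1}\sqcup e_{\tau_2}\rangle=0$ for all $\tau_1\in I^*$, $\tau_2\in J^*$.
   Context: Let $V=\mathbb R^d$ with basis $e_1,\dots,e_d$; $[n]=\{1,\dots,n\}$; $[d]^*=\bigcup_{m\ge0}[d]^m$ words, $|\tau|$ length, $e_\tau=e_{i_1}\otimes\cdots\otimes e_{i_m}$, $e_{()}=1$; for $I\subseteq[d]$, $I^*$ is the set of nonempty words with letters in $I$. $T(V)=\bigoplus_mV^{\otimes m}$, $T((V))=\prod_mV^{\otimes m}$ (algebra under $\otimes$), pairing $\langle s,t\rangle=\sum_\tau s_\tau t_\tau$; $\log y=\sum_{n\ge1}\frac{(-1)^{n-1}}{n}(y-1)^{\otimes n}$ for $\langle y,1\rangle=1$. Shuffle $\sqcup$: bilinear extension of $e_{\tau_1}\sqcup e_{\tau_2}=\sum_\sigma e_\sigma$ over interleavings counted with multiplicity. Weakly geometric $p$-rough paths (on some interval $[0,T]$): maps $\mathbf x:\{0\le s\le t\le T\}\to T((V))$ with (i) $\langle\mathbf x_{s,t},1\rangle=1$, $\langle\mathbf x_{s,t},f\sqcup g\rangle=\langle\mathbf x_{s,t},f\rangle\langle\mathbf x_{s,t},g\rangle$ for $f,g\in T(V)$; (ii) $\mathbf x_{s,t}\otimes\mathbf x_{t,u}=\mathbf x_{s,u}$; (iii) $\max_{1\le m\le p}\sup_D(\sum_i|\pi_m\mathbf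 x_{t_i,t_{i+1}}|^{p/m})^{1/p}<\infty$. $\mathcal G^w_p(V)$ is the set of these; $\mathbf x_{0,T}$ is the signature. A continuous path $z:[0,S]\to E$ ($E$ a topological space) is tree-like if $z=\psi\circ\varphi$ for some $\mathbb R$-tree $\mathcal T$, continuous $\varphi:[0,S]\to\mathcal T$ with $\varphi(0)=\varphi(S)$ and map $\psi:\mathcal T\to E$. Two weakly geometric rough paths $\mathbf x$ (on $[0,T]$) and $\mathbf y$ (on $[0,S]$) are tree-like equivalent if the path obtained by running $t\mapsto\mathbf x_{0,t}$ and then the time-reversal of $s\mapsto\mathbf y_{0,s}$, left-translated to start at $\mathbf x_{0,T}$, is tree-like. $\mathcal R^w_p(V)$ is the quotient of $\mathcal G^w_p(V)$ by this equivalence (unparametrised rough paths), topologised via $\mathbf x\mapsto\mathbf x_{0,T}$; the signature $\mathbf X_{0,T}$ is well defined on classes. $\mu_{\mathbf X}=\mathbb E[\mathbf X_{0,T}]$, $\kappa_{\mathbf X}=\log\mu_{\mathbf X}$. $\mathbf X|_I$ denotes the $\mathbb R^{I^*}$-valued random variable $(\langle\mathbf X_{0,T},e_\tau\rangle)_{\tau\in I^*}$ (product $\sigma$-algebra). Ordered partitions: for a finite poset $P$, partitions into nonempty blocks with refinement order, $|\mathbf a|$ the number of blocks; $\mathrm{Orp}(P)=\{\ker f:f:P\to\mathbb N\text{ order-preserving}\}$ ($\ker f$ = nonempty fibres; order-preserving: $x\le y\Rightarrow f(x)\le f(y)$); $\mathbf a!=\#\{f:P\to[|\mathbf a|]\text{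 order-preserving}:\ker f=\mathbf a\}$. Word poset $P_{\boldsymbol\tau}=\{(j,p):j\in[k],p\in[|\tau_j|]\}$ with $(j,p)\le(j',p')$ iff $j=j'$ and $p\le p'$ (positions distinct even if letters repeat); $\mathrm{Orp}(\boldsymbol\tau)=\mathrm{Orp}(P_{\boldsymbol\tau})$. For a block $B$, $B^j=B\cap(\{j\}\times[|\tau_j|])$, $e_{B^j}=e_{\tau_j(p_1)}\otimes\cdots\otimes e_{\tau_j(p_r)}$ for its positions $p_1<\dots<p_r$ ($\tau_j(p)$ the $p$-th letter). Generalised moment $\mu_{\mathbf X}(\mathbf a)=\prod_{B\in\mathbf a}\mathbb E[\prod_{j:B^j\neq\emptyset}\langle\mathbf X_{0,T},e_{B^j}\rangle]$. *)

theory Defs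
  imports "HOL-Probability.Probability"
begin

text \<open>An element of T((V)) is a function from words ('d list) to coefficients;
  e_tau is the indicator of the word tau. Elements of T(V) are those with finite support.\<close>

definition tsupp :: "('d list \<Rightarrow> real) \<Rightarrow> 'd list set" where
  "tsupp f = {w. f w \<noteq> 0}"

definition tfin :: "('d list \<Rightarrow> real) \<Rightarrow> bool" where
  "tfin f \<longleftrightarrow> finite (tsupp f)"

definition ew :: "'d list \<Rightarrow> 'd list \<Rightarrow> real" where
  "ew \<tau> = (\<lambda>w. if w = \<tau> then 1 else 0)"

definition tpair :: "('d list \<Rightarrow> real) \<Rightarrow> ('d list \<Rightarrow> real) \<Rightarrow> real" where
  "tpair s t = (\<Sum>\<tau>\<in>tsupp t. s \<tau> * t \<tau>)"

definition tmul :: "('d list \<Rightarrow> real) \<Rightarrow> ('d list \<Rightarrow> real) \<Rightarrow> 'd list \<Rightarrow> real" where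
  "tmul s t w = (\<Sum>i\<le>length w. s (take i w) * t (drop i w))"

definition tone :: "'d list \<Rightarrow> real" where
  "tone = ew []"

primrec tpow :: "('d list \<Rightarrow> real) \<Rightarrow> nat \<Rightarrow> 'd list \<Rightarrow> real" where
  "tpow y 0 = tone"
| "tpow y (Suc n) = tmul y (tpow y n)"

definition tlog :: "('d list \<Rightarrow> real) \<Rightarrow> 'd list \<Rightarrow> real" where
  "tlog y w = (\<Sum>n. (-1) ^ n / real (Suc n) * tpow (\<lambda>v. y v - tone v) (Suc n) w)"

text \<open>Number of interleavings (with multiplicity) of u and v giving w.\<close>
fun shc :: "'d list \<Rightarrow> 'd list \<Rightarrow> 'd list \<Rightarrow> nat" where
  "shc [] v w = (if w = v then 1 else 0)"
| "shc (x # u) [] w = (if w = x # u then 1 else 0)"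
| "shc (x # u) (y # v) [] = 0"
| "shc (x # u) (y # v) (z # w) =
     (if z = x then shc u (y # v) w else 0) + (if z = y then shc (x # u) v w else 0)"

definition shuffle :: "('d list \<Rightarrow> real) \<Rightarrow> ('d list \<Rightarrow> real) \<Rightarrow> 'd list \<Rightarrow> real" where
  "shuffle f g w = (\<Sum>(u, v)\<in>{(u, v). length u + length v = length w}.
                      f u * g v * real (shc u v w))"

fun shuffle_list :: "('d list \<Rightarrow> real) list \<Rightarrow> 'd list \<Rightarrow> real" where
  "shuffle_list [] = ew []"
| "shuffle_list [f] = f"
| "shuffle_list (f # g # fs) = shuffle f (shuffle_list (g # fs))"

definition tnorm :: "nat \<Rightarrow> ('d::finite list \<Rightarrow> real) \<Rightarrow> real" where
  "tnorm m y = sqrt (\<Sum>w\<in>{w. length w = m}. (y w)\<^sup>2)"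

definition wg_rough_path :: "real \<Rightarrow> real \<Rightarrow> (real \<Rightarrow> real \<Rightarrow> 'd::finite list \<Rightarrow> real) \<Rightarrow> bool" where
  "wg_rough_path p T x \<longleftrightarrow>
     (\<forall>w. continuous_on {(s, t). 0 \<le> s \<and> s \<le> t \<and> t \<le> T} (\<lambda>(s, t). x s t w)) \<and>
     (\<forall>s t. 0 \<le> s \<and> s \<le> t \<and> t \<le> T \<longrightarrow>
        x s t [] = 1 \<and>
        (\<forall>f g. tfin f \<and> tfin g \<longrightarrow>
           tpair (x s t) (shuffle f g) = tpair (x s t) f * tpair (x s t) g)) \<and>
     (\<forall>s t u. 0 \<le> s \<and> s \<le> t \<and> t \<le> u \<and> u \<le> T \<longrightarrow> tmul (x s t) (x t u) = x s u) \<and>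
     (\<forall>m::nat. 1 \<le> m \<and> real m \<le> p \<longrightarrow>
        (\<exists>C. \<forall>(n::nat) (t::nat \<Rightarrow> real).
           t 0 = 0 \<and> t n = T \<and> (\<forall>i<n. t i < t (Suc i)) \<longrightarrow>
           (\<Sum>i<n. tnorm m (x (t i) (t (Suc i))) powr (p / real m)) \<le> C))"

text \<open>The set of signatures x_{0,T} of weakly geometric p-rough paths (= signatures of
  elements of the unparametrised space R^w_p(V), on which the signature is well defined).\<close>
definition wg_signatures :: "real \<Rightarrow> ('d::finite list \<Rightarrow> real) set" where
  "wg_signatures p = {x 0 T | x T. 0 \<le> T \<and> wg_rough_path p T x}"

definition kernel :: "'a set \<Rightarrow> ('a \<Rightarrow> nat) \<Rightarrow> 'a set set" where
  "kernel P f = (\<lambda>n. {x\<in>P. f x = n}) ` (f ` P)"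

definition order_pres :: "'a set \<Rightarrow> ('a \<Rightarrow> 'a \<Rightarrow> bool) \<Rightarrow> ('a \<Rightarrow> nat) \<Rightarrow> bool" where
  "order_pres P le f \<longleftrightarrow> (\<forall>x\<in>P. \<forall>y\<in>P. le x y \<longrightarrow> f x \<le> f y)"

definition Orp :: "'a set \<Rightarrow> ('a \<Rightarrow> 'a \<Rightarrow> bool) \<Rightarrow> 'a set set set" where
  "Orp P le = {kernel P f | f. order_pres P le f}"

definition opfact :: "'a set \<Rightarrow> ('a \<Rightarrow> 'a \<Rightarrow> bool) \<Rightarrow> 'a set set \<Rightarrow> nat" where
  "opfact P le a = card {f \<in> P \<rightarrow>\<^sub>E {1..card a}. order_pres P le f \<and> kernel P f = a}"

text \<open>Word poset of a tuple of words (0-indexed positions (j,p)).\<close>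
definition wposet :: "'d list list \<Rightarrow> (nat \<times> nat) set" where
  "wposet taus = {(j, p). j < length taus \<and> p < length (taus ! j)}"

definition wle :: "nat \<times> nat \<Rightarrow> nat \<times> nat \<Rightarrow> bool" where
  "wle a b \<longleftrightarrow> fst a = fst b \<and> snd a \<le> snd b"

definition blockword :: "'d list list \<Rightarrow> (nat \<times> nat) set \<Rightarrow> nat \<Rightarrow> 'd list" where
  "blockword taus B j = map (\<lambda>p. taus ! j ! p) (sorted_list_of_set {p. (j, p) \<in> B})"

definition genmom :: "'a measure \<Rightarrow> ('a \<Rightarrow> 'd list \<Rightarrow> real) \<Rightarrow> 'd list list \<Rightarrow> (nat \<times> nat) set set \<Rightarrow> real" where
  "genmom M S taus a = (\<Prod>B\<in>a. integral\<^sup>L M (\<lambda>\<omega>.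
      \<Prod>j\<in>{j. j < length taus \<and> (\<exists>p. (j, p) \<in> B)}. S \<omega> (blockword taus B j)))"

definition words_in :: "'d set \<Rightarrow> 'd list set" where
  "words_in I = {\<tau>. \<tau> \<noteq> [] \<and> set \<tau> \<subseteq> I}"

definition mixfun :: "'d list \<Rightarrow> 'd list \<Rightarrow> ('d list \<Rightarrow> real) \<times> ('d list \<Rightarrow> real) \<Rightarrow> real" where
  "mixfun \<tau>1 \<tau>2 yz = (if \<tau>1 = [] then 1 else fst yz \<tau>1) * (if \<tau>2 = [] then 1 else snd yz \<tau>2)"

end

theory Submission
  imports Defs "HOL-Computational_Algebra.Formal_Power_Series"
begin

lemma shc_nil_right: "shc a [] w = (if w = a then 1 else 0)"
  by (cases a) auto

lemma shc_nil_nil: "shc a b [] = (if a = [] \<and> b = [] then 1 else 0)"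
  by (cases a; cases b) auto

lemma shc_len: "shc a b w \<noteq> 0 \<Longrightarrow> length w = length a + length b"
  by (induction a b w rule: shc.induct) (auto split: if_splits)

lemma split_ind: "j \<le> length b \<Longrightarrow> (w = take j b \<and> v = drop j b) \<longleftrightarrow> (j = length w \<and> b = w @ v)"
proof
  assume "j \<le> length b" "w = take j b \<and> v = drop j b"
  then show "j = length w \<and> b = w @ v" by auto
next
  assume "j = length w \<and> b = w @ v"
  then show "w = take j b \<and> v = drop j b" by auto
qed

lemma sum_split_ind: "(\<Sum>j\<le>length b. (if w = take j b then 1 else 0) * (if v = drop j b then 1 else 0) :: 'a::semiring_1)
   = (if b = w @ v then 1 else 0)"
proof -
  have "(\<Sum>j\<le>length b. (if w = take j b then 1 else 0) * (if v = drop j b then 1 else 0) :: 'a)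
     = (\<Sum>j\<le>length b. if j = length w then (if b = w @ v then 1 else 0) else 0)"
  proof (intro sum.cong refl)
    fix j assume "j \<in> {..length b}"
    then have j: "j \<le> length b" by simp
    have "(if w = take j b then 1 else 0) * (if v = drop j b then 1 else 0) = (if w = take j b \<and> v = drop j b then 1 else (0::'a))" by simp
    also have "\<dots> = (if j = length w \<and> b = w @ v then 1 else 0)" by (simp only: split_ind[OF j])
    also have "\<dots> = (if j = length w then (if b = w @ v then 1 else 0) else 0)" by simp
    finally show "(if w = take j b then 1 else 0) * (if v = drop j b then 1 else 0) = (if j = length w then (if b = w @ v then 1 else 0) else (0::'a))" .
  qed
  also have "\<dots> = (if b = w @ v then 1 else 0)" by (auto simp: sum.delta)
  finally show ?thesis .
qed

lemma shc_deconcat: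
  "shc a b (u @ v) = (\<Sum>i\<le>length a. \<Sum>j\<le>length b.
      shc (take i a) (take j b) u * shc (drop i a) (drop j b) v)"
proof (induction u arbitrary: a b)
  case Nil
  have "(\<Sum>i\<le>length a. \<Sum>j\<le>length b.
      shc (take i a) (take j b) [] * shc (drop i a) (drop j b) v)
     = (\<Sum>i\<le>length a. \<Sum>j\<le>length b. if i = 0 \<and> j = 0 then shc a b v else 0)"
    by (intro sum.cong refl) (auto simp: shc_nil_nil)
  also have "\<dots> = (\<Sum>i\<le>length a. if i = 0 then shc a b v else 0)"
    by (intro sum.cong refl) (cases "i = 0"; simp)
  also have "\<dots> = shc a b v" by simp
  finally show ?case by simp
next
  case (Cons z u)
  show ?case
  proof (cases a)
    case Nil
    have "(\<Sum>i\<le>length a. \<Sum>j\<le>length b.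
      shc (take i a) (take j b) (z # u) * shc (drop i a) (drop j b) v)
      = (\<Sum>j\<le>length b. (if z # u = take j b then 1 else 0) * (if v = drop j b then 1 else 0))"
      using Nil by simp
    also have "\<dots> = shc a b ((z#u)@v)"
      using Nil by (simp add: sum_split_ind)
    finally show ?thesis by simp
  next
    case (Cons x a')
    note a = this
    show ?thesis
    proof (cases b)
      case Nil
      have "(\<Sum>i\<le>length a. \<Sum>j\<le>length b.
        shc (take i a) (take j b) (z # u) * shc (drop i a) (drop j b) v)
        = (\<Sum>i\<le>length a. (if z # u = take i a then 1 else 0) * (if v = drop i a then 1 else 0))"
        using Nil by (simp add: shc_nil_right eq_commute)
      also have "\<dots> = shc a b ((z#u)@v)"
        using Nil by (simp add: sum_split_ind shc_nil_right eq_commute)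
      finally show ?thesis by simp
    next
      case (Cons y b')
      note b = this
      let ?F = "\<lambda>a b. (\<Sum>i\<le>length a. \<Sum>j\<le>length b.
          shc (take i a) (take j b) u * shc (drop i a) (drop j b) v)"
      have lhs: "shc a b ((z#u)@v) = (if z = x then ?F a' b else 0) + (if z = y then ?F a b' else 0)"
        using a b Cons.IH by simp
      have "(\<Sum>i\<le>length a. \<Sum>j\<le>length b.
        shc (take i a) (take j b) (z # u) * shc (drop i a) (drop j b) v)
        = (\<Sum>j\<le>length b. shc [] (take j b) (z # u) * shc a (drop j b) v)
          + (\<Sum>i\<le>length a'. \<Sum>j\<le>length b.
             shc (x # take i a') (take j b) (z # u) * shc (drop i a') (drop j b) v)"
        using a by (simp add: sum.atMost_Suc_shift del: sum.atMost_Suc)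
      also have "(\<Sum>j\<le>length b. shc [] (take j b) (z # u) * shc a (drop j b) v)
          = (if z = y then (\<Sum>j\<le>length b'. shc [] (take j b') u * shc a (drop j b') v) else 0)"
        using b by (simp add: sum.atMost_Suc_shift del: sum.atMost_Suc)
      also have "(\<Sum>i\<le>length a'. \<Sum>j\<le>length b.
             shc (x # take i a') (take j b) (z # u) * shc (drop i a') (drop j b) v)
        = (\<Sum>i\<le>length a'. (if z = x then shc (take i a') [] u * shc (drop i a') b v else 0)
            + (\<Sum>j\<le>length b'. (if z = x then shc (take i a') (take (Suc j) b) u else 0) * shc (drop i a') (drop j b') v
               + (if z = y then shc (x # take i a') (take j b') u else 0) * shc (drop i a') (drop j b') v))"
        using b by (cases "z = x"; cases "z = y") (simp_all add: sum.atMost_Suc_shift shc_nil_right distrib_right del: sum.atMost_Suc)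
      finally show ?thesis
        using a b lhs
        apply (simp add: sum.atMost_Suc_shift sum.distrib sum_distrib_left del: sum.atMost_Suc split del: if_split)
        apply (cases "z = x"; cases "z = y")
           apply (simp_all add: sum.distrib sum.atMost_Suc_shift del: sum.atMost_Suc)
        done
    qed
  qed
qed

definition LE :: "nat \<Rightarrow> 'd list set" where "LE n = {w. length w \<le> n}"

lemma finite_LE[simp]: "finite (LE n :: 'd::finite list set)"
proof -
  have "LE n = (\<Union>m\<le>n. {w::'d list. set w \<subseteq> UNIV \<and> length w = m})" by (auto simp: LE_def)
  moreover have "finite {w::'d list. length w = m}" for m
    using finite_lists_length_eq[of "UNIV::'d set" m] by simp
  ultimately show ?thesis by simp
qed


lemma finite_pairs_len[simp]: "finite {(u::'d::finite list, v::'d list). length u + length v = n}"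
proof (rule finite_subset[of _ "LE n \<times> LE n"])
  show "finite (LE n \<times> LE n :: ('d list \<times> 'd list) set)" by simp
qed (auto simp: LE_def)

lemma shuffle_ew:
  fixes h :: "'d::finite list \<Rightarrow> real"
  assumes "length w \<le> N"
  shows "shuffle (ew \<tau>) h w = (\<Sum>x\<in>LE N. h x * real (shc \<tau> x w))"
proof -
  let ?S = "{(u::'d list, v::'d list). length u + length v = length w}"
  have "shuffle (ew \<tau>) h w = (\<Sum>p\<in>?S. if fst p = \<tau> then h (snd p) * real (shc \<tau> (snd p) w) else 0)"
    unfolding shuffle_def by (intro sum.cong refl) (auto simp: ew_def)
  also have "\<dots> = (\<Sum>p\<in>{p\<in>?S. fst p = \<tau>}. h (snd p) * real (shc \<tau> (snd p) w))"
    by (rule sum.inter_filter[symmetric]) simp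
  also have "{p\<in>?S. fst p = \<tau>} = Pair \<tau> ` {v. length \<tau> + length v = length w}" by auto
  also have "(\<Sum>p\<in>Pair \<tau> ` {v. length \<tau> + length v = length w}. h (snd p) * real (shc \<tau> (snd p) w))
     = (\<Sum>v\<in>{v. length \<tau> + length v = length w}. h v * real (shc \<tau> v w))"
    by (subst sum.reindex) (auto simp: inj_on_def)
  also have "\<dots> = (\<Sum>x\<in>LE N. h x * real (shc \<tau> x w))"
  proof (rule sum.mono_neutral_left)
    show "finite (LE N :: 'd list set)" by simp
    show "{v. length \<tau> + length v = length w} \<subseteq> LE N" using assms by (auto simp: LE_def)
    show "\<forall>i\<in>LE N - {v. length \<tau> + length v = length w}. h i * real (shc \<tau> i w) = 0"
      using shc_len by fastforce
  qed
  finally show ?thesis .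
qed

lemma shuffle_ew_nil: "shuffle (ew \<tau>) (ew []) = (ew \<tau> :: 'd::finite list \<Rightarrow> real)"
proof
  fix w :: "'d list"
  have "shuffle (ew \<tau>) (ew []) w = (\<Sum>x\<in>LE (length w). ew [] x * real (shc \<tau> x w))"
    by (rule shuffle_ew) simp
  also have "\<dots> = (\<Sum>x::'d list\<in>LE (length w). if x = [] then real (shc \<tau> [] w) else 0)"
    by (intro sum.cong refl) (auto simp: ew_def)
  also have "\<dots> = real (shc \<tau> [] w)" by (subst sum.delta) (auto simp: LE_def[symmetric], simp add: LE_def)
  also have "\<dots> = ew \<tau> w" by (simp add: shc_nil_right ew_def)
  finally show "shuffle (ew \<tau>) (ew []) w = ew \<tau> w" .
qed

definition SL :: "'d list list \<Rightarrow> 'd list \<Rightarrow> real" where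
  "SL ws = shuffle_list (map ew ws)"

lemma SL_Nil[simp]: "SL [] = ew []" by (simp add: SL_def)

lemma SL_Cons: "SL (\<tau> # ws) = shuffle (ew \<tau>) (SL ws :: 'd::finite list \<Rightarrow> real)"
  by (cases ws) (simp_all add: SL_def shuffle_ew_nil)

definition splits :: "'d list list \<Rightarrow> nat list set" where
  "splits ws = {c. length c = length ws \<and> (\<forall>j<length ws. c ! j \<le> length (ws ! j))}"

definition takes :: "nat list \<Rightarrow> 'd list list \<Rightarrow> 'd list list" where
  "takes c ws = map (\<lambda>(i, w). take i w) (zip c ws)"

definition drops :: "nat list \<Rightarrow> 'd list list \<Rightarrow> 'd list list" where
  "drops c ws = map (\<lambda>(i, w). drop i w) (zip c ws)"

lemma splits_Nil[simp]: "splits [] = {[]}" by (auto simp: splits_def)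

lemma splits_Cons: "splits (\<tau> # ws) = (\<lambda>(i, c). i # c) ` ({..length \<tau>} \<times> splits ws)"
proof (intro set_eqI iffI)
  fix c assume "c \<in> splits (\<tau> # ws)"
  then obtain i c' where "c = i # c'" by (cases c) (auto simp: splits_def)
  with \<open>c \<in> splits (\<tau> # ws)\<close> show "c \<in> (\<lambda>(i, c). i # c) ` ({..length \<tau>} \<times> splits ws)"
    by (force simp: splits_def image_iff)
next
  fix c assume "c \<in> (\<lambda>(i, c). i # c) ` ({..length \<tau>} \<times> splits ws)"
  then show "c \<in> splits (\<tau> # ws)"
    by (auto simp: splits_def nth_Cons split: nat.splits)
qed

lemma finite_splits[simp]: "finite (splits ws)"
  by (induction ws) (auto simp: splits_Cons)

lemma sum_splits_Cons:
  "(\<Sum>c\<in>splits (\<tau> # ws). g c) = (\<Sum>i\<le>length \<tau>. \<Sum>c\<in>splits ws. g (i # c))"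
  by (simp add: splits_Cons sum.reindex inj_on_def sum.cartesian_product case_prod_unfold)

lemma takes_Cons[simp]: "takes (i # c) (\<tau> # ws) = take i \<tau> # takes c ws"
  by (simp add: takes_def)
lemma drops_Cons[simp]: "drops (i # c) (\<tau> # ws) = drop i \<tau> # drops c ws"
  by (simp add: drops_def)
lemma takes_Nil[simp]: "takes [] [] = []" by (simp add: takes_def)
lemma drops_Nil[simp]: "drops [] [] = []" by (simp add: drops_def)

lemma SL_deconcat:
  fixes ws :: "'d::finite list list"
  shows "SL ws (u @ v) = (\<Sum>c\<in>splits ws. SL (takes c ws) u * SL (drops c ws) v)"
proof (induction ws arbitrary: u v)
  case Nil
  then show ?case by (simp add: ew_def)
next
  case (Cons \<tau> ws)
  define N where "N = length u + length v"
  let ?A = "\<lambda>i y. real (shc (take i \<tau>) y u)"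
  let ?B = "\<lambda>i y. real (shc (drop i \<tau>) y v)"
  have "SL (\<tau> # ws) (u @ v) = (\<Sum>x\<in>LE N. SL ws x * real (shc \<tau> x (u @ v)))"
    by (simp add: SL_Cons N_def shuffle_ew)
  also have "\<dots> = (\<Sum>x\<in>LE N. \<Sum>i\<le>length \<tau>. \<Sum>j\<le>length x. SL ws x * (?A i (take j x) * ?B i (drop j x)))"
    by (simp add: shc_deconcat sum_distrib_left)
  also have "\<dots> = (\<Sum>i\<le>length \<tau>. \<Sum>x\<in>LE N. \<Sum>j\<le>length x. SL ws x * (?A i (take j x) * ?B i (drop j x)))"
    by (rule sum.swap)
  also have "\<dots> = (\<Sum>i\<le>length \<tau>. \<Sum>x1\<in>LE N. \<Sum>x2\<in>LE N. SL ws (x1 @ x2) * (?A i x1 * ?B i x2))"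
  proof (rule sum.cong[OF refl])
    fix i assume "i \<in> {..length \<tau>}"
    let ?g = "\<lambda>x1 x2. SL ws (x1 @ x2) * (?A i x1 * ?B i x2)"
    have "(\<Sum>x\<in>LE N. \<Sum>j\<le>length x. SL ws x * (?A i (take j x) * ?B i (drop j x)))
        = (\<Sum>(x, j)\<in>Sigma (LE N) (\<lambda>x. {..length x}). ?g (take j x) (drop j x))"
      by (simp add: sum.Sigma)
    also have "\<dots> = (\<Sum>p\<in>{(x1::'d list, x2::'d list). x1 \<in> LE N \<and> x2 \<in> LE N \<and> length x1 + length x2 \<le> N}. ?g (fst p) (snd p))"
    proof (rule sum.reindex_bij_witness[where i = "\<lambda>(x1, x2). (x1 @ x2, length x1)" and j = "\<lambda>(x, j). (take j x, drop j x)"])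
    qed (auto simp: LE_def)
    also have "\<dots> = (\<Sum>p\<in>LE N \<times> LE N. ?g (fst p) (snd p))"
    proof (rule sum.mono_neutral_left)
      show "finite (LE N \<times> LE N :: ('d list \<times> 'd list) set)" by simp
      show "\<forall>p\<in>LE N \<times> LE N - {(x1::'d list, x2::'d list). x1 \<in> LE N \<and> x2 \<in> LE N \<and> length x1 + length x2 \<le> N}. ?g (fst p) (snd p) = 0"
      proof
        fix p assume p: "p \<in> LE N \<times> LE N - {(x1::'d list, x2::'d list). x1 \<in> LE N \<and> x2 \<in> LE N \<and> length x1 + length x2 \<le> N}"
        show "?g (fst p) (snd p) = 0"
        proof (rule ccontr)
          assume "?g (fst p) (snd p) \<noteq> 0"
          then have "shc (take i \<tau>) (fst p) u \<noteq> 0" "shc (drop i \<tau>) (snd p) v \<noteq> 0" by auto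
          then have "length u = length (take i \<tau>) + length (fst p)" "length v = length (drop i \<tau>) + length (snd p)"
            using shc_len by blast+
          then have "length (fst p) \<le> length u" "length (snd p) \<le> length v" by auto
          with p show False by (auto simp: N_def)
        qed
      qed
    qed auto
    also have "\<dots> = (\<Sum>x1\<in>LE N. \<Sum>x2\<in>LE N. ?g x1 x2)"
      by (simp add: sum.cartesian_product case_prod_unfold)
    finally show "(\<Sum>x\<in>LE N. \<Sum>j\<le>length x. SL ws x * (?A i (take j x) * ?B i (drop j x))) = (\<Sum>x1\<in>LE N. \<Sum>x2\<in>LE N. ?g x1 x2)" .
  qed
  also have "\<dots> = (\<Sum>i\<le>length \<tau>. \<Sum>c\<in>splits ws. (\<Sum>x1\<in>LE N. SL (takes c ws) x1 * ?A i x1) * (\<Sum>x2\<in>LE N. SL (drops c ws) x2 * ?B i x2))"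
    by (simp add: Cons.IH sum_distrib_left sum_distrib_right sum.swap[where A = "splits ws"] mult_ac)
  also have "\<dots> = (\<Sum>c\<in>splits (\<tau> # ws). SL (takes c (\<tau> # ws)) u * SL (drops c (\<tau> # ws)) v)"
    by (simp add: sum_splits_Cons SL_Cons N_def shuffle_ew[of u "length u + length v"] shuffle_ew[of v "length u + length v"])
  finally show ?case .
qed

lemma mem_LE: "w \<in> LE n \<longleftrightarrow> length w \<le> n" by (simp add: LE_def)

definition WL :: "nat \<Rightarrow> 'd list set" where "WL n = {w. length w = n}"

lemma finite_WL[simp]: "finite (WL n :: 'd::finite list set)"
  by (rule finite_subset[OF _ finite_LE[of n]]) (auto simp: WL_def LE_def)

definition lsum :: "'d list list \<Rightarrow> nat" where "lsum ws = sum_list (map length ws)"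

lemma lsum_Cons[simp]: "lsum (\<tau> # ws) = length \<tau> + lsum ws" by (simp add: lsum_def)
lemma lsum_Nil[simp]: "lsum [] = 0" by (simp add: lsum_def)

lemma shuffle_ew_nil_left: "shuffle (ew []) h = (h :: 'd::finite list \<Rightarrow> real)"
proof
  fix w :: "'d list"
  have "shuffle (ew []) h w = (\<Sum>x\<in>LE (length w). h x * real (shc [] x w))"
    by (rule shuffle_ew) simp
  also have "\<dots> = (\<Sum>x\<in>LE (length w). if x = w then h w else 0)"
    by (intro sum.cong refl) auto
  also have "\<dots> = h w" by (subst sum.delta) (auto simp: mem_LE)
  finally show "shuffle (ew []) h w = h w" .
qed

lemma SL_supp:
  fixes ws :: "'d::finite list list"
  shows "SL ws w \<noteq> 0 \<Longrightarrow> length w = lsum ws"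
proof (induction ws arbitrary: w)
  case Nil
  then show ?case by (simp add: ew_def split: if_splits)
next
  case (Cons \<tau> ws)
  have "SL (\<tau> # ws) w = (\<Sum>x\<in>LE (length w). SL ws x * real (shc \<tau> x w))"
    by (simp add: SL_Cons shuffle_ew)
  with Cons.prems obtain x where "SL ws x \<noteq> 0" "shc \<tau> x w \<noteq> 0"
    by (metis (no_types, lifting) mult_eq_0_iff of_nat_0 sum.neutral)
  with Cons.IH shc_len show ?case by fastforce
qed

lemma SL_all_empty: "(\<forall>\<tau>\<in>set ws. \<tau> = []) \<Longrightarrow> SL ws = (ew [] :: 'd::finite list \<Rightarrow> real)"
  by (induction ws) (auto simp: SL_Cons shuffle_ew_nil_left)

lemma tfin_SL: "tfin (SL (ws :: 'd::finite list list))"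
  unfolding tfin_def tsupp_def
  by (rule finite_subset[OF _ finite_WL[of "lsum ws"]]) (auto simp: WL_def dest: SL_supp)

lemma tfin_ew: "tfin (ew \<tau>)"
  unfolding tfin_def tsupp_def ew_def by (rule finite_subset[of _ "{\<tau>}"]) auto

definition Gv :: "('d list \<Rightarrow> real) \<Rightarrow> 'd list list \<Rightarrow> real" where
  "Gv y ws = (\<Sum>w\<in>WL (lsum ws). y w * SL ws w)"

lemma tpair_SL: "tpair y (SL ws) = Gv y (ws :: 'd::finite list list)"
  unfolding tpair_def Gv_def
proof (rule sum.mono_neutral_left)
  show "finite (WL (lsum ws) :: 'd list set)" by simp
  show "tsupp (SL ws) \<subseteq> WL (lsum ws)" by (auto simp: tsupp_def WL_def dest: SL_supp)
  show "\<forall>i\<in>WL (lsum ws) - tsupp (SL ws). y i * SL ws i = 0" by (auto simp: tsupp_def)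
qed

lemma tpair_ew: "tpair y (ew \<tau>) = y \<tau>"
proof -
  have "tsupp (ew \<tau>) = {\<tau>}" by (auto simp: tsupp_def ew_def)
  then show ?thesis by (simp add: tpair_def ew_def)
qed

lemma Gv_single: "Gv y [\<tau>] = y (\<tau>::'d::finite list)"
proof -
  have "SL [\<tau>] = ew \<tau>" by (simp add: SL_def)
  then show ?thesis using tpair_SL[of y "[\<tau>]"] tpair_ew by metis
qed

lemma Gv_tone: "Gv tone ws = (if \<forall>\<tau>\<in>set ws. \<tau> = [] then 1 else 0)"
  for ws :: "'d::finite list list"
proof (cases "\<forall>\<tau>\<in>set ws. \<tau> = []")
  case True
  then have "lsum ws = 0" by (induction ws) auto
  then show ?thesis using True by (simp add: Gv_def SL_all_empty WL_def tone_def ew_def)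
next
  case False
  then have "lsum ws \<noteq> 0" by (induction ws) auto
  then have "\<forall>w\<in>WL (lsum ws). tone w = 0" by (auto simp: WL_def tone_def ew_def)
  then have "Gv tone ws = 0" unfolding Gv_def by (intro sum.neutral) auto
  then show ?thesis using False by simp
qed

lemma Gv_sum: "finite A \<Longrightarrow> Gv (\<lambda>w. \<Sum>n\<in>A. f n w) ws = (\<Sum>n\<in>A. Gv (f n) ws)"
  by (simp add: Gv_def sum_distrib_right sum.swap[of _ A])

lemma Gv_scale: "Gv (\<lambda>w. a * f w) ws = a * Gv f ws"
  by (simp add: Gv_def sum_distrib_left mult_ac)

lemma Gv_diff: "Gv (\<lambda>w. f w - g w) ws = Gv f ws - Gv g ws"
  by (simp add: Gv_def left_diff_distrib sum_subtractf)

lemma grouplike_SL: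
  fixes x :: "'d::finite list \<Rightarrow> real"
  assumes x0: "x [] = 1" and ch: "\<And>f g. tfin f \<Longrightarrow> tfin g \<Longrightarrow> tpair x (shuffle f g) = tpair x f * tpair x g"
  shows "Gv x ws = prod_list (map x ws)"
proof (induction ws)
  case Nil
  then show ?case using tpair_SL[of x "[]"] by (simp add: tpair_ew x0)
next
  case (Cons \<tau> ws)
  have "Gv x (\<tau> # ws) = tpair x (shuffle (ew \<tau>) (SL ws))" by (simp add: tpair_SL[symmetric] SL_Cons)
  also have "\<dots> = x \<tau> * Gv x ws" by (simp add: ch tfin_ew tfin_SL tpair_ew tpair_SL)
  finally show ?case using Cons by simp
qed

lemma lsum_takes_drops: "c \<in> splits ws \<Longrightarrow> lsum (takes c ws) + lsum (drops c ws) = lsum ws"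
proof (induction ws arbitrary: c)
  case Nil then show ?case by (simp add: takes_def drops_def)
next
  case (Cons \<tau> ws)
  then obtain i c' where "c = i # c'" "i \<le> length \<tau>" "c' \<in> splits ws" by (auto simp: splits_Cons)
  with Cons.IH show ?case by simp
qed

lemma sum_pairs_support:
  fixes F :: "'d::finite list \<Rightarrow> 'd list \<Rightarrow> real"
  assumes "a + b = L" and "\<And>u v. F u v \<noteq> 0 \<Longrightarrow> length u = a \<and> length v = b"
  shows "(\<Sum>(u, v)\<in>{(u::'d list, v::'d list). length u + length v = L}. F u v) = (\<Sum>u\<in>WL a. \<Sum>v\<in>WL b. F u v)"
proof -
  have "(\<Sum>(u, v)\<in>{(u::'d list, v::'d list). length u + length v = L}. F u v) = (\<Sum>(u, v)\<in>WL a \<times> WL b. F u v)"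
  proof (rule sum.mono_neutral_right)
    show "WL a \<times> WL b \<subseteq> {(u::'d list, v::'d list). length u + length v = L}" using assms(1) by (auto simp: WL_def)
    show "\<forall>i\<in>{(u::'d list, v::'d list). length u + length v = L} - WL a \<times> WL b. (case i of (u, v) \<Rightarrow> F u v) = 0"
      using assms(2) by (auto simp: WL_def)
  qed simp
  then show ?thesis by (simp add: sum.cartesian_product)
qed

lemma Gv_tmul:
  fixes y z :: "'d::finite list \<Rightarrow> real"
  shows "Gv (tmul y z) ws = (\<Sum>c\<in>splits ws. Gv y (takes c ws) * Gv z (drops c ws))"
proof -
  define L where "L = lsum ws"
  have "Gv (tmul y z) ws = (\<Sum>w\<in>WL L. \<Sum>i\<le>length w. y (take i w) * z (drop i w) * SL ws (take i w @ drop i w))"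
    by (simp add: Gv_def tmul_def L_def sum_distrib_right)
  also have "\<dots> = (\<Sum>(w, i)\<in>Sigma (WL L) (\<lambda>w. {..length w}). y (take i w) * z (drop i w) * SL ws (take i w @ drop i w))"
    by (simp add: sum.Sigma)
  also have "\<dots> = (\<Sum>(u, v)\<in>{(u::'d list, v::'d list). length u + length v = L}. y u * z v * SL ws (u @ v))"
    by (rule sum.reindex_bij_witness[where i = "\<lambda>(u, v). (u @ v, length u)" and j = "\<lambda>(w, i). (take i w, drop i w)"])
      (auto simp: WL_def)
  also have "\<dots> = (\<Sum>(u, v)\<in>{(u::'d list, v::'d list). length u + length v = L}. \<Sum>c\<in>splits ws. y u * z v * (SL (takes c ws) u * SL (drops c ws) v))"
    by (simp add: SL_deconcat sum_distrib_left)
  also have "\<dots> = (\<Sum>c\<in>splits ws. \<Sum>(u, v)\<in>{(u::'d list, v::'d list). length u + length v = L}. y u * z v * (SL (takes c ws) u * SL (drops c ws) v))"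
    by (subst sum.swap) (simp add: case_prod_unfold)
  also have "\<dots> = (\<Sum>c\<in>splits ws. Gv y (takes c ws) * Gv z (drops c ws))"
  proof (rule sum.cong[OF refl])
    fix c assume c: "c \<in> splits ws"
    have "(\<Sum>(u, v)\<in>{(u::'d list, v::'d list). length u + length v = L}. y u * z v * (SL (takes c ws) u * SL (drops c ws) v))
       = (\<Sum>u\<in>WL (lsum (takes c ws)). \<Sum>v\<in>WL (lsum (drops c ws)). y u * z v * (SL (takes c ws) u * SL (drops c ws) v))"
      by (rule sum_pairs_support) (auto simp: L_def lsum_takes_drops[OF c] dest: SL_supp)
    also have "\<dots> = Gv y (takes c ws) * Gv z (drops c ws)"
      by (simp add: Gv_def sum_product mult_ac)
    finally show "(\<Sum>(u, v)\<in>{(u::'d list, v::'d list). length u + length v = L}. y u * z v * (SL (takes c ws) u * SL (drops c ws) v))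
       = Gv y (takes c ws) * Gv z (drops c ws)" .
  qed
  finally show ?thesis .
qed

lemma tmul_assoc: "tmul (tmul a b) c = tmul a (tmul b c)" for a b c :: "'d list \<Rightarrow> real"
proof
  fix w :: "'d list"
  define n where "n = length w"
  let ?G = "\<lambda>i j. a (take i w) * b (take j (drop i w)) * c (drop (i + j) w)"
  have "tmul (tmul a b) c w = (\<Sum>k\<le>n. \<Sum>i\<le>k. ?G i (k - i))"
    unfolding tmul_def n_def
    by (intro sum.cong refl) (auto simp: sum_distrib_right min_def take_drop)
  also have "\<dots> = (\<Sum>(i, j)\<in>{(i, j). i + j \<le> n}. ?G i j)"
    by (rule sum.triangle_reindex_eq[symmetric])
  also have "\<dots> = (\<Sum>i\<le>n. \<Sum>j\<le>n - i. ?G i j)"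
    by (simp add: sum.Sigma) (rule sum.cong; auto)
  also have "\<dots> = tmul a (tmul b c) w"
    unfolding tmul_def n_def by (intro sum.cong refl) (auto simp: sum_distrib_left mult_ac add.commute)
  finally show "tmul (tmul a b) c w = tmul a (tmul b c) w" .
qed

lemma tmul_tone_left: "tmul tone y = y" for y :: "'d list \<Rightarrow> real"
proof
  fix w :: "'d list"
  have "tmul tone y w = (\<Sum>i\<le>length w. if i = 0 then y w else 0)"
    unfolding tmul_def tone_def ew_def by (intro sum.cong refl) auto
  then show "tmul tone y w = y w" by simp
qed

lemma tmul_tone_right: "tmul y tone = y" for y :: "'d list \<Rightarrow> real"
proof
  fix w :: "'d list"
  have "tmul y tone w = (\<Sum>i\<le>length w. if i = length w then y w else 0)"
    unfolding tmul_def tone_def ew_def by (intro sum.cong refl) auto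
  then show "tmul y tone w = y w" by simp
qed

lemma tpow_Suc_right: "tpow y (Suc n) = tmul (tpow y n) y"
proof (induction n)
  case 0 then show ?case by (simp add: tmul_tone_left tmul_tone_right)
next
  case (Suc n)
  have "tpow y (Suc (Suc n)) = tmul y (tmul (tpow y n) y)" using Suc by simp
  also have "\<dots> = tmul (tpow y (Suc n)) y" by (simp add: tmul_assoc)
  finally show ?case .
qed

lemma wposet_eq: "wposet ws = Sigma {..<length ws} (\<lambda>j. {..<length (ws ! j)})"
  by (auto simp: wposet_def)

lemma finite_wposet[simp]: "finite (wposet ws)"
  by (simp add: wposet_eq)

definition OP :: "'d list list \<Rightarrow> nat \<Rightarrow> (nat \<times> nat \<Rightarrow> nat) set" where
  "OP ws n = {f \<in> wposet ws \<rightarrow>\<^sub>E {1..n}. order_pres (wposet ws) wle f}"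

lemma finite_OP[simp]: "finite (OP ws n)"
  unfolding OP_def by (rule finite_subset[OF _ finite_PiE[of "wposet ws" "\<lambda>_. {1..n}"]]) auto

definition fib :: "'d list list \<Rightarrow> (nat \<times> nat \<Rightarrow> nat) \<Rightarrow> nat \<Rightarrow> (nat \<times> nat) set" where
  "fib ws f i = {x \<in> wposet ws. f x = i}"

definition piece :: "'d list list \<Rightarrow> (nat \<times> nat \<Rightarrow> nat) \<Rightarrow> nat \<Rightarrow> 'd list list" where
  "piece ws f i = map (blockword ws (fib ws f i)) [0..<length ws]"

lemma map_nth_upt_drop: "map (\<lambda>p. w ! p) [a..<length w] = drop a w"
  by (rule nth_equalityI) auto

lemma downclosed_eq:
  fixes S :: "nat set"
  assumes "S \<subseteq> {..<m}" "\<And>p q. q \<in> S \<Longrightarrow> p \<le> q \<Longrightarrow> p \<in> S"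
  shows "S = {..<card S}"
proof (cases "S = {}")
  case True then show ?thesis by simp
next
  case False
  have fin: "finite S" using assms(1) finite_subset by blast
  have "S = {..Max S}"
    using False fin by (auto intro: Max_ge assms(2)[OF Max_in[OF fin False]])
  then show ?thesis by (metis card_atMost lessThan_Suc_atMost)
qed

lemma takes_length[simp]: "length (takes c ws) = min (length c) (length ws)"
  by (simp add: takes_def)
lemma drops_length[simp]: "length (drops c ws) = min (length c) (length ws)"
  by (simp add: drops_def)

lemma takes_nth: "j < length c \<Longrightarrow> j < length ws \<Longrightarrow> takes c ws ! j = take (c ! j) (ws ! j)"
  by (simp add: takes_def)
lemma drops_nth: "j < length c \<Longrightarrow> j < length ws \<Longrightarrow> drops c ws ! j = drop (c ! j) (ws ! j)"
  by (simp add: drops_def)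

lemma length_takes_nth: "c \<in> splits ws \<Longrightarrow> j < length ws \<Longrightarrow> length (takes c ws ! j) = c ! j"
  by (auto simp: splits_def takes_nth min_def)

lemma wposet_fst: "x \<in> wposet ws \<Longrightarrow> fst x < length ws"
  by (auto simp: wposet_def)

lemma takes_memI: "c \<in> splits ws \<Longrightarrow> fst x < length ws \<Longrightarrow> snd x < c ! fst x \<Longrightarrow> x \<in> wposet (takes c ws)"
  using length_takes_nth[of c ws "fst x"] by (cases x) (auto simp: wposet_def splits_def)

lemma wposet_takes:
  assumes "c \<in> splits ws"
  shows "wposet (takes c ws) = {(j, p). j < length ws \<and> p < c ! j}"
  using assms length_takes_nth[OF assms] by (auto simp: wposet_def splits_def)

definition ext_op :: "'d list list \<Rightarrow> nat list \<Rightarrow> nat \<Rightarrow> (nat \<times> nat \<Rightarrow> nat) \<Rightarrow> nat \<times> nat \<Rightarrow> nat" where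
  "ext_op ws c n g = (\<lambda>x. if x \<in> wposet ws then (if snd x < c ! fst x then g x else Suc n) else undefined)"

definition cut_of :: "'d list list \<Rightarrow> nat \<Rightarrow> (nat \<times> nat \<Rightarrow> nat) \<Rightarrow> nat list" where
  "cut_of ws n f = map (\<lambda>j. card {p. p < length (ws ! j) \<and> f (j, p) \<le> n}) [0..<length ws]"

lemma cut_of_down:
  assumes f: "f \<in> OP ws m" and j: "j < length ws"
  shows "{p. p < length (ws ! j) \<and> f (j, p) \<le> n} = {..<cut_of ws n f ! j}"
proof -
  let ?S = "{p. p < length (ws ! j) \<and> f (j, p) \<le> n}"
  have "?S = {..<card ?S}"
  proof (rule downclosed_eq[of _ "length (ws ! j)"])
    fix p q assume "q \<in> ?S" "p \<le> q"
    moreover have "f (j, p) \<le> f (j, q)" if "p \<le> q" "q < length (ws ! j)"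
      using f that j unfolding OP_def order_pres_def wle_def wposet_def by auto
    ultimately show "p \<in> ?S" by auto
  qed auto
  then show ?thesis using j by (simp add: cut_of_def)
qed

lemma cut_of_splits: "f \<in> OP ws m \<Longrightarrow> cut_of ws n f \<in> splits ws"
proof -
  assume f: "f \<in> OP ws m"
  { fix j assume j: "j < length ws"
    have "card {p. p < length (ws ! j) \<and> f (j, p) \<le> n} \<le> card {..<length (ws ! j)}"
      by (rule card_mono) auto
    then have "cut_of ws n f ! j \<le> length (ws ! j)" using j by (simp add: cut_of_def) }
  then show ?thesis by (simp add: splits_def cut_of_def)
qed

lemma blockword_cong:
  assumes "\<And>p. (j, p) \<in> B \<Longrightarrow> ws ! j ! p = ws' ! j ! p" "{p. (j, p) \<in> B} = {p. (j, p) \<in> B'}"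
    and finB: "finite B"
  shows "blockword ws B j = blockword ws' B' j"
proof -
  have fin: "finite {p. (j, p) \<in> B}"
    by (rule finite_subset[of _ "snd ` B"]) (use finB in force)+
  show ?thesis unfolding blockword_def assms(2)[symmetric]
    by (rule map_cong) (auto simp: fin assms(1))
qed

lemma mem_wposet_takes:
  assumes "c \<in> splits ws"
  shows "x \<in> wposet (takes c ws) \<longleftrightarrow> fst x < length ws \<and> snd x < c ! fst x"
  using wposet_takes[OF assms] by (cases x) auto

lemma wposet_takes_sub:
  assumes "c \<in> splits ws" "x \<in> wposet (takes c ws)"
  shows "x \<in> wposet ws"
proof -
  obtain j p where x: "x = (j, p)" by (cases x)
  have "j < length ws" "p < c ! j" using assms x by (auto simp: mem_wposet_takes)
  moreover have "c ! j \<le> length (ws ! j)" using assms(1) \<open>j < length ws\<close> by (simp add: splits_def)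
  ultimately show ?thesis using x by (simp add: wposet_def)
qed

lemma ext_op_OP:
  assumes c: "c \<in> splits ws" and g: "g \<in> OP (takes c ws) n"
  shows "ext_op ws c n g \<in> OP ws (Suc n)"
proof -
  have gv: "g x \<in> {1..n}" if "x \<in> wposet (takes c ws)" for x
    using g that unfolding OP_def by auto
  have go: "g x \<le> g y" if "x \<in> wposet (takes c ws)" "y \<in> wposet (takes c ws)" "wle x y" for x y
    using g that unfolding OP_def order_pres_def by auto
  show ?thesis unfolding OP_def
  proof (intro CollectI conjI PiE_I)
    fix x assume x: "x \<in> wposet ws"
    show "ext_op ws c n g x \<in> {1..Suc n}"
    proof (cases "snd x < c ! fst x")
      case True
      then have "x \<in> wposet (takes c ws)" using x c by (intro takes_memI c wposet_fst)
      then show ?thesis using True x gv[of x] by (auto simp: ext_op_def)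
    qed (use x in \<open>auto simp: ext_op_def\<close>)
  next
    fix x assume "x \<notin> wposet ws" then show "ext_op ws c n g x = undefined" by (simp add: ext_op_def)
  next
    show "order_pres (wposet ws) wle (ext_op ws c n g)"
      unfolding order_pres_def
    proof (intro ballI impI)
      fix x y assume x: "x \<in> wposet ws" and y: "y \<in> wposet ws" and xy: "wle x y"
      show "ext_op ws c n g x \<le> ext_op ws c n g y"
      proof (cases "snd y < c ! fst y")
        case True
        then have "snd x < c ! fst x" using xy by (auto simp: wle_def)
        then have "x \<in> wposet (takes c ws)" "y \<in> wposet (takes c ws)"
          using x y c True by (intro takes_memI c wposet_fst; simp)+
        then show ?thesis using go xy x y True \<open>snd x < c ! fst x\<close> by (simp add: ext_op_def)
      next
        case False
        have "ext_op ws c n g x \<le> Suc n"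
        proof (cases "snd x < c ! fst x")
          case True
          then have "x \<in> wposet (takes c ws)" using x c by (intro takes_memI c wposet_fst)
          then show ?thesis using gv[of x] x True by (auto simp: ext_op_def)
        qed (use x in \<open>simp add: ext_op_def\<close>)
        then show ?thesis using False y by (simp add: ext_op_def)
      qed
    qed
  qed
qed

lemma OP_vals: "f \<in> OP ws m \<Longrightarrow> x \<in> wposet ws \<Longrightarrow> f x \<in> {1..m}"
  unfolding OP_def by auto

lemma cut_ext:
  assumes c: "c \<in> splits ws" and g: "g \<in> OP (takes c ws) n"
  shows "cut_of ws n (ext_op ws c n g) = c"
proof (rule nth_equalityI)
  show "length (cut_of ws n (ext_op ws c n g)) = length c" using c by (simp add: cut_of_def splits_def)
  fix j assume "j < length (cut_of ws n (ext_op ws c n g))"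
  then have j: "j < length ws" by (simp add: cut_of_def)
  have cj: "c ! j \<le> length (ws ! j)" using c j by (simp add: splits_def)
  have "{p. p < length (ws ! j) \<and> ext_op ws c n g (j, p) \<le> n} = {..<c ! j}"
  proof (intro set_eqI iffI)
    fix p assume p: "p \<in> {p. p < length (ws ! j) \<and> ext_op ws c n g (j, p) \<le> n}"
    then have "(j, p) \<in> wposet ws" using j by (simp add: wposet_def)
    with p show "p \<in> {..<c ! j}" by (auto simp: ext_op_def split: if_splits)
  next
    fix p assume p: "p \<in> {..<c ! j}"
    then have "(j, p) \<in> wposet (takes c ws)" using c j by (simp add: mem_wposet_takes)
    moreover have "(j, p) \<in> wposet ws" using p cj j by (simp add: wposet_def)
    ultimately show "p \<in> {p. p < length (ws ! j) \<and> ext_op ws c n g (j, p) \<le> n}"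
      using OP_vals[OF g] p cj by (auto simp: ext_op_def)
  qed
  then show "cut_of ws n (ext_op ws c n g) ! j = c ! j" using j by (simp add: cut_of_def)
qed

lemma restrict_ext:
  assumes c: "c \<in> splits ws" and g: "g \<in> OP (takes c ws) n"
  shows "restrict (ext_op ws c n g) (wposet (takes c ws)) = g"
proof
  fix x show "restrict (ext_op ws c n g) (wposet (takes c ws)) x = g x"
  proof (cases "x \<in> wposet (takes c ws)")
    case True
    then show ?thesis using wposet_takes_sub[OF c True] c by (simp add: ext_op_def mem_wposet_takes)
  next
    case False
    then show ?thesis using g unfolding OP_def by (cases x) (auto simp: PiE_def extensional_def)
  qed
qed

lemma restrict_OP:
  assumes f: "f \<in> OP ws (Suc n)"
  shows "restrict f (wposet (takes (cut_of ws n f) ws)) \<in> OP (takes (cut_of ws n f) ws) n"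
proof -
  let ?c = "cut_of ws n f"
  have c: "?c \<in> splits ws" using cut_of_splits[OF f] .
  have val: "f x \<in> {1..n}" if x: "x \<in> wposet (takes ?c ws)" for x
  proof -
    obtain j p where xjp: "x = (j, p)" by (cases x)
    have j: "j < length ws" and p: "p < ?c ! j" using x c xjp by (auto simp: mem_wposet_takes)
    have "p \<in> {p. p < length (ws ! j) \<and> f (j, p) \<le> n}" using cut_of_down[OF f j, of n] p by simp
    moreover have "f x \<ge> 1" using OP_vals[OF f wposet_takes_sub[OF c x]] by simp
    ultimately show ?thesis using xjp by simp
  qed
  show ?thesis unfolding OP_def
  proof (intro CollectI conjI)
    show "restrict f (wposet (takes ?c ws)) \<in> wposet (takes ?c ws) \<rightarrow>\<^sub>E {1..n}"
      using val by auto
    show "order_pres (wposet (takes ?c ws)) wle (restrict f (wposet (takes ?c ws)))"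
      using f wposet_takes_sub[OF c] unfolding OP_def order_pres_def by auto
  qed
qed

lemma ext_restrict:
  assumes f: "f \<in> OP ws (Suc n)"
  shows "ext_op ws (cut_of ws n f) n (restrict f (wposet (takes (cut_of ws n f) ws))) = f"
proof
  fix x
  let ?c = "cut_of ws n f"
  have c: "?c \<in> splits ws" using cut_of_splits[OF f] .
  show "ext_op ws ?c n (restrict f (wposet (takes ?c ws))) x = f x"
  proof (cases "x \<in> wposet ws")
    case False
    then show ?thesis using f unfolding OP_def by (cases x) (auto simp: ext_op_def PiE_def extensional_def)
  next
    case True
    obtain j p where xjp: "x = (j, p)" by (cases x)
    have j: "j < length ws" and pl: "p < length (ws ! j)" using True xjp by (auto simp: wposet_def)
    show ?thesis
    proof (cases "p < ?c ! j")
      case True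
      then show ?thesis using j xjp \<open>x \<in> wposet ws\<close> c by (simp add: ext_op_def mem_wposet_takes)
    next
      case False
      then have "p \<notin> {p. p < length (ws ! j) \<and> f (j, p) \<le> n}" using cut_of_down[OF f j, of n] by simp
      then have "f x > n" using pl xjp by auto
      moreover have "f x \<le> Suc n" using OP_vals[OF f \<open>x \<in> wposet ws\<close>] by simp
      ultimately show ?thesis using False xjp \<open>x \<in> wposet ws\<close> by (simp add: ext_op_def)
    qed
  qed
qed

lemma piece_ext_low:
  assumes c: "c \<in> splits ws" and g: "g \<in> OP (takes c ws) n" and i: "i \<in> {1..n}"
  shows "piece ws (ext_op ws c n g) i = piece (takes c ws) g i"
proof -
  have fibeq: "fib ws (ext_op ws c n g) i = fib (takes c ws) g i"
  proof (intro set_eqI iffI)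
    fix x assume "x \<in> fib ws (ext_op ws c n g) i"
    then have x: "x \<in> wposet ws" and e: "ext_op ws c n g x = i" by (auto simp: fib_def)
    then have "snd x < c ! fst x" using i by (auto simp: ext_op_def split: if_splits)
    then have "x \<in> wposet (takes c ws)" using x c by (intro takes_memI c wposet_fst)
    then show "x \<in> fib (takes c ws) g i" using e x \<open>snd x < c ! fst x\<close> by (simp add: fib_def ext_op_def)
  next
    fix x assume "x \<in> fib (takes c ws) g i"
    then have x: "x \<in> wposet (takes c ws)" and e: "g x = i" by (auto simp: fib_def)
    then show "x \<in> fib ws (ext_op ws c n g) i"
      using wposet_takes_sub[OF c x] c by (simp add: fib_def ext_op_def mem_wposet_takes)
  qed
  have len: "length c = length ws" using c by (simp add: splits_def)
  show ?thesis unfolding piece_def fibeq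
  proof (rule nth_equalityI)
    show "length (map (blockword ws (fib (takes c ws) g i)) [0..<length ws]) =
      length (map (blockword (takes c ws) (fib (takes c ws) g i)) [0..<length (takes c ws)])" using len by simp
    fix j assume "j < length (map (blockword ws (fib (takes c ws) g i)) [0..<length ws])"
    then have j: "j < length ws" by simp
    have "blockword ws (fib (takes c ws) g i) j = blockword (takes c ws) (fib (takes c ws) g i) j"
    proof (rule blockword_cong)
      fix p assume "(j, p) \<in> fib (takes c ws) g i"
      then have "p < c ! j" using c by (simp add: fib_def mem_wposet_takes)
      then show "ws ! j ! p = takes c ws ! j ! p" using j len by (simp add: takes_nth)
    qed (simp_all add: fib_def)
    then show "map (blockword ws (fib (takes c ws) g i)) [0..<length ws] ! j =
      map (blockword (takes c ws) (fib (takes c ws) g i)) [0..<length (takes c ws)] ! j" using j len by simp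
  qed
qed

lemma piece_ext_top:
  assumes c: "c \<in> splits ws" and g: "g \<in> OP (takes c ws) n"
  shows "piece ws (ext_op ws c n g) (Suc n) = drops c ws"
proof -
  have len: "length c = length ws" using c by (simp add: splits_def)
  show ?thesis unfolding piece_def
  proof (rule nth_equalityI)
    show "length (map (blockword ws (fib ws (ext_op ws c n g) (Suc n))) [0..<length ws]) = length (drops c ws)"
      using len by simp
    fix j assume "j < length (map (blockword ws (fib ws (ext_op ws c n g) (Suc n))) [0..<length ws])"
    then have j: "j < length ws" by simp
    have cj: "c ! j \<le> length (ws ! j)" using c j by (simp add: splits_def)
    have "{p. (j, p) \<in> fib ws (ext_op ws c n g) (Suc n)} = {c ! j..<length (ws ! j)}"
    proof (intro set_eqI iffI)
      fix p assume "p \<in> {p. (j, p) \<in> fib ws (ext_op ws c n g) (Suc n)}"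
      then have x: "(j, p) \<in> wposet ws" and e: "ext_op ws c n g (j, p) = Suc n" by (auto simp: fib_def)
      have "\<not> p < c ! j"
      proof
        assume "p < c ! j"
        then have "(j, p) \<in> wposet (takes c ws)" using c j by (simp add: mem_wposet_takes)
        then have "g (j, p) \<le> n" using OP_vals[OF g] by fastforce
        with e x \<open>p < c ! j\<close> show False by (simp add: ext_op_def)
      qed
      then show "p \<in> {c ! j..<length (ws ! j)}" using x by (simp add: wposet_def)
    next
      fix p assume "p \<in> {c ! j..<length (ws ! j)}"
      then show "p \<in> {p. (j, p) \<in> fib ws (ext_op ws c n g) (Suc n)}"
        using j by (simp add: fib_def ext_op_def wposet_def)
    qed
    then have "blockword ws (fib ws (ext_op ws c n g) (Suc n)) j = drop (c ! j) (ws ! j)"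
      by (simp add: blockword_def map_nth_upt_drop)
    then show "map (blockword ws (fib ws (ext_op ws c n g) (Suc n))) [0..<length ws] ! j = drops c ws ! j"
      using j len by (simp add: drops_nth)
  qed
qed

lemma Gv_tpow:
  fixes y :: "'d::finite list \<Rightarrow> real"
  shows "Gv (tpow y n) ws = (\<Sum>f\<in>OP ws n. \<Prod>i\<in>{1..n}. Gv y (piece ws f i))"
proof (induction n arbitrary: ws)
  case 0
  show ?case
  proof (cases "\<forall>\<tau>\<in>set ws. \<tau> = []")
    case True
    then have "wposet ws = {}" using nth_mem by (fastforce simp: wposet_def)
    then have "OP ws 0 = {\<lambda>_. undefined}" by (auto simp: OP_def order_pres_def)
    then show ?thesis using True by (simp add: Gv_tone tone_def[symmetric])
  next
    case False
    then obtain j where "j < length ws" "ws ! j \<noteq> []" by (auto simp: in_set_conv_nth)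
    then have "(j, 0) \<in> wposet ws" by (simp add: wposet_def)
    then have "wposet ws \<noteq> {}" by auto
    then have "OP ws 0 = {}" by (auto simp: OP_def PiE_eq_empty_iff)
    then show ?thesis using False by (simp add: Gv_tone tone_def[symmetric])
  qed
next
  case (Suc n)
  have "Gv (tpow y (Suc n)) ws = (\<Sum>c\<in>splits ws. Gv (tpow y n) (takes c ws) * Gv y (drops c ws))"
    by (simp only: tpow_Suc_right Gv_tmul)
  also have "\<dots> = (\<Sum>c\<in>splits ws. \<Sum>g\<in>OP (takes c ws) n. (\<Prod>i\<in>{1..n}. Gv y (piece (takes c ws) g i)) * Gv y (drops c ws))"
    by (simp add: Suc.IH sum_distrib_right)
  also have "\<dots> = (\<Sum>(c, g)\<in>Sigma (splits ws) (\<lambda>c. OP (takes c ws) n). (\<Prod>i\<in>{1..n}. Gv y (piece (takes c ws) g i)) * Gv y (drops c ws))"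
    by (simp add: sum.Sigma)
  also have "\<dots> = (\<Sum>f\<in>OP ws (Suc n). \<Prod>i\<in>{1..Suc n}. Gv y (piece ws f i))"
  proof (rule sum.reindex_bij_witness[where i = "\<lambda>f. (cut_of ws n f, restrict f (wposet (takes (cut_of ws n f) ws)))"
        and j = "\<lambda>(c, g). ext_op ws c n g"])
    fix f assume f: "f \<in> OP ws (Suc n)"
    show "(case (cut_of ws n f, restrict f (wposet (takes (cut_of ws n f) ws))) of (c, g) \<Rightarrow> ext_op ws c n g) = f"
      using ext_restrict[OF f] by simp
    show "(cut_of ws n f, restrict f (wposet (takes (cut_of ws n f) ws))) \<in> Sigma (splits ws) (\<lambda>c. OP (takes c ws) n)"
      using cut_of_splits[OF f] restrict_OP[OF f] by simp
  next
    fix a assume a: "a \<in> Sigma (splits ws) (\<lambda>c. OP (takes c ws) n)"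
    obtain c g where cg: "a = (c, g)" by (cases a)
    have c: "c \<in> splits ws" and g: "g \<in> OP (takes c ws) n" using a cg by auto
    show "(cut_of ws n (case a of (c, g) \<Rightarrow> ext_op ws c n g),
          restrict (case a of (c, g) \<Rightarrow> ext_op ws c n g) (wposet (takes (cut_of ws n (case a of (c, g) \<Rightarrow> ext_op ws c n g)) ws))) = a"
      using cut_ext[OF c g] restrict_ext[OF c g] cg by simp
    show "(case a of (c, g) \<Rightarrow> ext_op ws c n g) \<in> OP ws (Suc n)"
      using ext_op_OP[OF c g] cg by simp
    have "(\<Prod>i\<in>{1..Suc n}. Gv y (piece ws (ext_op ws c n g) i))
       = (\<Prod>i\<in>{1..n}. Gv y (piece ws (ext_op ws c n g) i)) * Gv y (piece ws (ext_op ws c n g) (Suc n))"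
      by (simp add: prod.cl_ivl_Suc)
    also have "\<dots> = (\<Prod>i\<in>{1..n}. Gv y (piece (takes c ws) g i)) * Gv y (drops c ws)"
      using piece_ext_low[OF c g] piece_ext_top[OF c g] by simp
    finally show "(\<Prod>i\<in>{1..Suc n}. Gv y (piece ws (case a of (c, g) \<Rightarrow> ext_op ws c n g) i)) =
      (case a of (c, g) \<Rightarrow> (\<Prod>i\<in>{1..n}. Gv y (piece (takes c ws) g i)) * Gv y (drops c ws))"
      using cg by simp
  qed
  finally show ?case .
qed

declare tpow.simps(2)[simp del]

lemma prod_list_map_upt: "prod_list (map f [0..<n]) = (\<Prod>j\<in>{..<n}. (f j :: 'a::comm_monoid_mult))"
  by (induction n) (auto simp: lessThan_Suc mult.commute)

lemma tpow_vanish: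
  fixes y :: "'d list \<Rightarrow> real"
  assumes y0: "y [] = 0"
  shows "length w < m \<Longrightarrow> tpow y m w = 0"
proof (induction m arbitrary: w)
  case 0 then show ?case by simp
next
  case (Suc m)
  have "tpow y (Suc m) w = (\<Sum>i\<le>length w. y (take i w) * tpow y m (drop i w))"
    by (simp add: tmul_def tpow.simps(2))
  also have "\<dots> = 0"
  proof (intro sum.neutral ballI)
    fix i assume "i \<in> {..length w}"
    show "y (take i w) * tpow y m (drop i w) = 0"
    proof (cases "i = 0")
      case True then show ?thesis using y0 by simp
    next
      case False
      then have "length (drop i w) < m" using Suc.prems \<open>i \<in> {..length w}\<close> by auto
      then show ?thesis using Suc.IH by simp
    qed
  qed
  finally show ?case .
qed

definition ymu :: "('d list \<Rightarrow> real) \<Rightarrow> 'd list \<Rightarrow> real" where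
  "ymu \<mu> = (\<lambda>w. \<mu> w - tone w)"

lemma ymu_nil: "\<mu> [] = 1 \<Longrightarrow> ymu \<mu> [] = 0"
  by (simp add: ymu_def tone_def ew_def)

lemma tlog_fin:
  fixes \<mu> :: "'d list \<Rightarrow> real"
  assumes m0: "\<mu> [] = 1" and w: "length w \<le> L"
  shows "tlog \<mu> w = (\<Sum>n<L. (-1) ^ n / real (Suc n) * tpow (ymu \<mu>) (Suc n) w)"
proof -
  have "tlog \<mu> w = (\<Sum>n. (-1) ^ n / real (Suc n) * tpow (ymu \<mu>) (Suc n) w)"
    by (simp add: tlog_def ymu_def)
  also have "\<dots> = (\<Sum>n<L. (-1) ^ n / real (Suc n) * tpow (ymu \<mu>) (Suc n) w)"
  proof (rule suminf_finite)
    fix n assume "n \<notin> {..<L}"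
    then have "length w < Suc n" using w by auto
    then show "(-1) ^ n / real (Suc n) * tpow (ymu \<mu>) (Suc n) w = 0"
      using tpow_vanish[of "ymu \<mu>", OF ymu_nil[of \<mu>, OF m0]] by simp
  qed simp
  finally show ?thesis .
qed

lemma Gv_cong: "(\<And>w. length w = lsum ws \<Longrightarrow> f w = g w) \<Longrightarrow> Gv f ws = Gv g ws"
  unfolding Gv_def by (intro sum.cong refl) (auto simp: WL_def)

lemma Gv_ymu: "Gv (ymu \<mu>) ws = Gv \<mu> ws - Gv tone ws"
  by (simp add: ymu_def Gv_diff)

lemma card_wposet: "card (wposet ws) = lsum ws"
proof -
  have "card (wposet ws) = (\<Sum>j<length ws. length (ws ! j))"
    by (simp add: wposet_eq card_SigmaI)
  also have "\<dots> = lsum ws" by (simp add: lsum_def sum_list_sum_nth atLeast0LessThan)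
  finally show ?thesis .
qed

definition OPs :: "'d list list \<Rightarrow> nat \<Rightarrow> (nat \<times> nat \<Rightarrow> nat) set" where
  "OPs ws m = {f \<in> OP ws m. f ` wposet ws = {1..m}}"

lemma blockword_empty: "{p. (j, p) \<in> B} = {} \<Longrightarrow> blockword ws B j = []"
  by (simp add: blockword_def)

lemma fib_sub: "fib ws f i \<subseteq> wposet ws" by (auto simp: fib_def)

lemma piece_empty_iff:
  "(\<forall>\<tau>\<in>set (piece ws f i). \<tau> = []) \<longleftrightarrow> fib ws f i = {}"
proof
  assume A: "\<forall>\<tau>\<in>set (piece ws f i). \<tau> = []"
  show "fib ws f i = {}"
  proof (rule ccontr)
    assume "fib ws f i \<noteq> {}"
    then obtain j p where jp: "(j, p) \<in> fib ws f i" by auto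
    then have j: "j < length ws" using fib_sub by (force simp: wposet_def)
    have fin: "finite {q. (j, q) \<in> fib ws f i}"
      by (rule finite_subset[of _ "snd ` wposet ws"]) (use fib_sub in force)+
    have "p \<in> set (sorted_list_of_set {q. (j, q) \<in> fib ws f i})" using fin jp by simp
    then have "blockword ws (fib ws f i) j \<noteq> []" by (auto simp: blockword_def)
    moreover have "blockword ws (fib ws f i) j \<in> set (piece ws f i)" using j by (auto simp: piece_def)
    ultimately show False using A by auto
  qed
next
  assume "fib ws f i = {}"
  then show "\<forall>\<tau>\<in>set (piece ws f i). \<tau> = []" by (auto simp: piece_def blockword_def)
qed

lemma Gv_all_empty: "(\<forall>\<tau>\<in>set ws. \<tau> = []) \<Longrightarrow> Gv \<mu> ws = \<mu> [] "
  for ws :: "'d::finite list list"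
proof -
  assume A: "\<forall>\<tau>\<in>set ws. \<tau> = []"
  then have "lsum ws = 0" by (induction ws) auto
  then show ?thesis using A by (simp add: Gv_def SL_all_empty WL_def ew_def)
qed

lemma Gv_tlog:
  fixes \<mu> :: "'d::finite list \<Rightarrow> real"
  assumes m0: "\<mu> [] = 1"
  shows "Gv (tlog \<mu>) ws = (\<Sum>m\<in>{1..lsum ws}. (-1) ^ (m - 1) / real m *
            (\<Sum>f\<in>OPs ws m. \<Prod>i\<in>{1..m}. Gv \<mu> (piece ws f i)))"
proof -
  define L where "L = lsum ws"
  have "Gv (tlog \<mu>) ws = Gv (\<lambda>w. \<Sum>n<L. (-1) ^ n / real (Suc n) * tpow (ymu \<mu>) (Suc n) w) ws"
    by (rule Gv_cong, rule tlog_fin[of \<mu>, OF m0], simp add: L_def)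
  also have "\<dots> = (\<Sum>n<L. (-1) ^ n / real (Suc n) * Gv (tpow (ymu \<mu>) (Suc n)) ws)"
    by (subst Gv_sum, simp, intro sum.cong refl, rule Gv_scale)
  also have "\<dots> = (\<Sum>m\<in>{1..L}. (-1) ^ (m - 1) / real m * Gv (tpow (ymu \<mu>) m) ws)"
    by (rule sum.reindex_bij_witness[where i = "\<lambda>m. m - 1" and j = Suc]) auto
  also have "\<dots> = (\<Sum>m\<in>{1..L}. (-1) ^ (m - 1) / real m *
            (\<Sum>f\<in>OPs ws m. \<Prod>i\<in>{1..m}. Gv \<mu> (piece ws f i)))"
  proof (rule sum.cong[OF refl])
    fix m assume "m \<in> {1..L}"
    have "Gv (tpow (ymu \<mu>) m) ws = (\<Sum>f\<in>OP ws m. \<Prod>i\<in>{1..m}. Gv (ymu \<mu>) (piece ws f i))"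
      by (rule Gv_tpow)
    also have "\<dots> = (\<Sum>f\<in>OPs ws m. \<Prod>i\<in>{1..m}. Gv (ymu \<mu>) (piece ws f i))"
    proof (rule sum.mono_neutral_right)
      show "OPs ws m \<subseteq> OP ws m" by (auto simp: OPs_def)
      show "\<forall>f\<in>OP ws m - OPs ws m. (\<Prod>i\<in>{1..m}. Gv (ymu \<mu>) (piece ws f i)) = 0"
      proof
        fix f assume f: "f \<in> OP ws m - OPs ws m"
        then have "f ` wposet ws \<noteq> {1..m}" by (auto simp: OPs_def)
        moreover have "f ` wposet ws \<subseteq> {1..m}" using f OP_vals by blast
        ultimately obtain i where i: "i \<in> {1..m}" "i \<notin> f ` wposet ws" by blast
        then have "fib ws f i = {}" by (auto simp: fib_def)
        then have "Gv (ymu \<mu>) (piece ws f i) = 0"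
          using piece_empty_iff[of ws f i] by (simp add: Gv_ymu Gv_all_empty Gv_tone m0)
        then show "(\<Prod>i\<in>{1..m}. Gv (ymu \<mu>) (piece ws f i)) = 0"
          using i(1) by (metis finite_atLeastAtMost prod_zero_iff)
      qed
    qed simp
    also have "\<dots> = (\<Sum>f\<in>OPs ws m. \<Prod>i\<in>{1..m}. Gv \<mu> (piece ws f i))"
    proof (intro sum.cong refl prod.cong)
      fix f i assume f: "f \<in> OPs ws m" and i: "i \<in> {1..m}"
      then have "i \<in> f ` wposet ws" by (simp add: OPs_def)
      then have "fib ws f i \<noteq> {}" by (auto simp: fib_def)
      then have "Gv tone (piece ws f i) = 0" using piece_empty_iff[of ws f i] by (simp add: Gv_tone)
      then show "Gv (ymu \<mu>) (piece ws f i) = Gv \<mu> (piece ws f i)" by (simp add: Gv_ymu)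
    qed
    finally show "(-1) ^ (m - 1) / real m * Gv (tpow (ymu \<mu>) m) ws = (-1) ^ (m - 1) / real m *
            (\<Sum>f\<in>OPs ws m. \<Prod>i\<in>{1..m}. Gv \<mu> (piece ws f i))" by simp
  qed
  finally show ?thesis by (simp add: L_def)
qed

lemma card_kernel:
  assumes "finite P"
  shows "card (kernel P f) = card (f ` P)"
  unfolding kernel_def
proof (rule card_image)
  show "inj_on (\<lambda>n. {x \<in> P. f x = n}) (f ` P)"
  proof (rule inj_onI)
    fix x y assume "x \<in> f ` P" "y \<in> f ` P" and e: "{z \<in> P. f z = x} = {z \<in> P. f z = y}"
    then obtain u where "u \<in> P" "f u = x" by auto
    then have "u \<in> {z \<in> P. f z = y}" using e by auto
    then show "x = y" using \<open>f u = x\<close> by simp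
  qed
qed

lemma finite_OPs[simp]: "finite (OPs ws m)"
  by (rule finite_subset[OF _ finite_OP[of ws m]]) (auto simp: OPs_def)

lemma kernel_OPs:
  assumes f: "f \<in> OPs ws m"
  shows "kernel (wposet ws) f = fib ws f ` {1..m}"
  using f unfolding kernel_def OPs_def fib_def by simp

lemma card_kernel_OPs:
  assumes f: "f \<in> OPs ws m"
  shows "card (kernel (wposet ws) f) = m"
  using f card_kernel[OF finite_wposet, of ws f] by (simp add: OPs_def)

definition FA :: "'d list list \<Rightarrow> (nat \<times> nat) set set \<Rightarrow> (nat \<times> nat \<Rightarrow> nat) set" where
  "FA ws a = {f \<in> wposet ws \<rightarrow>\<^sub>E {1..card a}. order_pres (wposet ws) wle f \<and> kernel (wposet ws) f = a}"

lemma finite_FA[simp]: "finite (FA ws a)"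
  unfolding FA_def by (rule finite_subset[OF _ finite_PiE[of "wposet ws" "\<lambda>_. {1..card a}"]]) auto

lemma opfact_FA: "opfact (wposet ws) wle a = card (FA ws a)"
  by (simp add: opfact_def FA_def)

lemma finite_Orp: "finite (Orp (wposet ws) wle)"
proof (rule finite_subset[of _ "Pow (Pow (wposet ws))"])
  show "Orp (wposet ws) wle \<subseteq> Pow (Pow (wposet ws))" by (auto simp: Orp_def kernel_def)
qed simp

lemma FA_OPs:
  assumes f: "f \<in> FA ws a"
  shows "f \<in> OPs ws (card a)"
proof -
  have sub: "f ` wposet ws \<subseteq> {1..card a}" using f by (auto simp: FA_def)
  have "card (f ` wposet ws) = card a" using f card_kernel[OF finite_wposet, of ws f] by (simp add: FA_def)
  then have "f ` wposet ws = {1..card a}" using sub by (intro card_subset_eq) auto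
  then show ?thesis using f by (auto simp: FA_def OPs_def OP_def)
qed

lemma regroup:
  fixes G :: "(nat \<times> nat) set set \<Rightarrow> real" and c :: "nat \<Rightarrow> real"
  assumes ne: "wposet ws \<noteq> {}"
  shows "(\<Sum>m\<in>{1..lsum ws}. c m * (\<Sum>f\<in>OPs ws m. G (kernel (wposet ws) f)))
       = (\<Sum>a\<in>Orp (wposet ws) wle. c (card a) * real (opfact (wposet ws) wle a) * G a)"
proof -
  have "(\<Sum>a\<in>Orp (wposet ws) wle. c (card a) * real (opfact (wposet ws) wle a) * G a)
      = (\<Sum>a\<in>Orp (wposet ws) wle. \<Sum>f\<in>FA ws a. c (card a) * G (kernel (wposet ws) f))"
  proof (rule sum.cong[OF refl])
    fix a
    have "(\<Sum>f\<in>FA ws a. c (card a) * G (kernel (wposet ws) f)) = (\<Sum>f\<in>FA ws a. c (card a) * G a)"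
      by (rule sum.cong) (auto simp: FA_def)
    then show "c (card a) * real (opfact (wposet ws) wle a) * G a = (\<Sum>f\<in>FA ws a. c (card a) * G (kernel (wposet ws) f))"
      by (simp add: opfact_FA)
  qed
  also have "\<dots> = (\<Sum>(a, f)\<in>Sigma (Orp (wposet ws) wle) (FA ws). c (card a) * G (kernel (wposet ws) f))"
    by (rule sum.Sigma) (simp_all add: finite_Orp)
  also have "\<dots> = (\<Sum>(m, f)\<in>Sigma {1..lsum ws} (OPs ws). c m * G (kernel (wposet ws) f))"
  proof (rule sum.reindex_bij_witness[where i = "\<lambda>(m, f). (kernel (wposet ws) f, f)" and j = "\<lambda>(a, f). (card a, f)"])
    fix p assume p: "p \<in> Sigma {1..lsum ws} (OPs ws)"
    obtain m f where pf: "p = (m, f)" by (cases p)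
    have f: "f \<in> OPs ws m" and m: "m \<in> {1..lsum ws}" using p pf by auto
    show "(case (case p of (m, f) \<Rightarrow> (kernel (wposet ws) f, f)) of (a, f) \<Rightarrow> (card a, f)) = p"
      using card_kernel_OPs[OF f] pf by simp
    have "kernel (wposet ws) f \<in> Orp (wposet ws) wle"
      using f unfolding Orp_def OPs_def OP_def by auto
    moreover have "f \<in> FA ws (kernel (wposet ws) f)"
      using f card_kernel_OPs[OF f] unfolding FA_def OPs_def OP_def by auto
    ultimately show "(case p of (m, f) \<Rightarrow> (kernel (wposet ws) f, f)) \<in> Sigma (Orp (wposet ws) wle) (FA ws)"
      using pf by simp
  next
    fix q assume q: "q \<in> Sigma (Orp (wposet ws) wle) (FA ws)"
    obtain a f where qf: "q = (a, f)" by (cases q)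
    have a: "a \<in> Orp (wposet ws) wle" and f: "f \<in> FA ws a" using q qf by auto
    have ka: "kernel (wposet ws) f = a" using f by (simp add: FA_def)
    show "(case (case q of (a, f) \<Rightarrow> (card a, f)) of (m, f) \<Rightarrow> (kernel (wposet ws) f, f)) = q"
      using qf ka by simp
    have fo: "f \<in> OPs ws (card a)" by (rule FA_OPs[OF f])
    have "card a \<le> lsum ws"
    proof -
      have "card a = card (f ` wposet ws)" using card_kernel[OF finite_wposet, of ws f] ka by simp
      also have "\<dots> \<le> card (wposet ws)" by (rule card_image_le) simp
      finally show ?thesis by (simp add: card_wposet)
    qed
    moreover have "card a \<ge> 1"
    proof -
      have "card (f ` wposet ws) \<noteq> 0" using ne by (simp add: card_eq_0_iff)
      then show ?thesis using card_kernel[OF finite_wposet, of ws f] ka by (metis One_nat_def Suc_leI neq0_conv)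
    qed
    ultimately show "(case q of (a, f) \<Rightarrow> (card a, f)) \<in> Sigma {1..lsum ws} (OPs ws)"
      using qf fo by simp
    show "(case (case q of (a, f) \<Rightarrow> (card a, f)) of (m, f) \<Rightarrow> c m * G (kernel (wposet ws) f)) =
          (case q of (a, f) \<Rightarrow> c (card a) * G (kernel (wposet ws) f))" using qf by simp
  qed
  also have "\<dots> = (\<Sum>m\<in>{1..lsum ws}. c m * (\<Sum>f\<in>OPs ws m. G (kernel (wposet ws) f)))"
    by (subst sum.Sigma[symmetric]) (simp_all add: sum_distrib_left)
  finally show ?thesis ..
qed

lemma fib_inj:
  assumes f: "f \<in> OPs ws m"
  shows "inj_on (fib ws f) {1..m}"
proof (rule inj_onI)
  fix i j assume i: "i \<in> {1..m}" and j: "j \<in> {1..m}" and e: "fib ws f i = fib ws f j"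
  have "i \<in> f ` wposet ws" using i f by (simp add: OPs_def)
  then obtain x where "x \<in> wposet ws" "f x = i" by auto
  then have "x \<in> fib ws f i" by (simp add: fib_def)
  with e show "i = j" using \<open>f x = i\<close> by (simp add: fib_def)
qed

definition Gblk :: "('d list \<Rightarrow> real) \<Rightarrow> 'd list list \<Rightarrow> (nat \<times> nat) set set \<Rightarrow> real" where
  "Gblk \<mu> ws a = (\<Prod>B\<in>a. Gv \<mu> (map (blockword ws B) [0..<length ws]))"

lemma prod_piece_kernel:
  assumes f: "f \<in> OPs ws m"
  shows "(\<Prod>i\<in>{1..m}. Gv \<mu> (piece ws f i)) = Gblk \<mu> ws (kernel (wposet ws) f)"
  unfolding Gblk_def kernel_OPs[OF f] piece_def
  by (subst prod.reindex[OF fib_inj[OF f]]) (simp add: o_def)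

lemma part1_alg:
  fixes \<mu> :: "'d::finite list \<Rightarrow> real"
  assumes m0: "\<mu> [] = 1" and ne: "wposet ws \<noteq> {}"
  shows "Gv (tlog \<mu>) ws = (\<Sum>a\<in>Orp (wposet ws) wle.
           (-1) ^ (card a - 1) * real (opfact (wposet ws) wle a) / real (card a) * Gblk \<mu> ws a)"
proof -
  have "Gv (tlog \<mu>) ws = (\<Sum>m\<in>{1..lsum ws}. (-1) ^ (m - 1) / real m *
            (\<Sum>f\<in>OPs ws m. Gblk \<mu> ws (kernel (wposet ws) f)))"
    unfolding Gv_tlog[of \<mu>, OF m0] by (intro sum.cong refl arg_cong2[where f = "(*)"] prod_piece_kernel) auto
  also have "\<dots> = (\<Sum>a\<in>Orp (wposet ws) wle. (-1) ^ (card a - 1) / real (card a) * real (opfact (wposet ws) wle a) * Gblk \<mu> ws a)"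
    by (rule regroup[OF ne])
  finally show ?thesis by (simp add: mult_ac)
qed

lemma grouplike_of_wg:
  assumes "x \<in> wg_signatures p"
  shows "x [] = 1" "\<And>f g. tfin f \<Longrightarrow> tfin g \<Longrightarrow> tpair x (shuffle f g) = tpair x f * tpair x g"
proof -
  obtain y T where "x = y 0 T" "0 \<le> T" "wg_rough_path p T y"
    using assms by (auto simp: wg_signatures_def)
  then show "x [] = 1" "\<And>f g. tfin f \<Longrightarrow> tfin g \<Longrightarrow> tpair x (shuffle f g) = tpair x f * tpair x g"
    unfolding wg_rough_path_def by auto
qed

locale sigsetup =
  fixes M :: "'a measure" and p :: real and S :: "'a \<Rightarrow> 'd::finite list \<Rightarrow> real"
  assumes ps: "prob_space M"
    and meas: "\<And>w. (\<lambda>\<omega>. S \<omega> w) \<in> borel_measurable M"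
    and sig: "\<And>\<omega>. \<omega> \<in> space M \<Longrightarrow> S \<omega> \<in> wg_signatures p"
    and intg: "\<And>f. tfin f \<Longrightarrow> integrable M (\<lambda>\<omega>. tpair (S \<omega>) f)"
begin

definition mu :: "'d list \<Rightarrow> real" where "mu = (\<lambda>w. integral\<^sup>L M (\<lambda>\<omega>. S \<omega> w))"

lemma S_nil: "\<omega> \<in> space M \<Longrightarrow> S \<omega> [] = 1"
  using grouplike_of_wg(1)[OF sig] .

lemma S_Gv: "\<omega> \<in> space M \<Longrightarrow> Gv (S \<omega>) ws = prod_list (map (S \<omega>) ws)"
  using grouplike_SL[OF grouplike_of_wg(1)[OF sig] grouplike_of_wg(2)[OF sig]] by blast

lemma int_S: "integrable M (\<lambda>\<omega>. S \<omega> w)"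
  using intg[OF tfin_ew[of w]] by (simp add: tpair_ew)

lemma int_prod: "integrable M (\<lambda>\<omega>. prod_list (map (S \<omega>) ws))"
proof -
  have "integrable M (\<lambda>\<omega>. tpair (S \<omega>) (SL ws))" by (rule intg[OF tfin_SL])
  then show ?thesis
    by (rule Bochner_Integration.integrable_cong[THEN iffD1, OF refl, rotated]) (simp add: tpair_SL S_Gv)
qed

lemma mu_nil: "mu [] = 1"
proof -
  have "mu [] = integral\<^sup>L M (\<lambda>\<omega>. 1)" unfolding mu_def by (rule Bochner_Integration.integral_cong) (auto simp: S_nil)
  then show ?thesis using prob_space.prob_space[OF ps] by simp
qed

lemma Gv_mu: "Gv mu ws = integral\<^sup>L M (\<lambda>\<omega>. prod_list (map (S \<omega>) ws))"
proof -
  have "Gv mu ws = (\<Sum>w\<in>WL (lsum ws). integral\<^sup>L M (\<lambda>\<omega>. S \<omega> w * SL ws w))"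
    by (simp add: Gv_def mu_def)
  also have "\<dots> = integral\<^sup>L M (\<lambda>\<omega>. \<Sum>w\<in>WL (lsum ws). S \<omega> w * SL ws w)"
    by (rule Bochner_Integration.integral_sum[symmetric]) (simp add: int_S)
  also have "\<dots> = integral\<^sup>L M (\<lambda>\<omega>. prod_list (map (S \<omega>) ws))"
    by (rule Bochner_Integration.integral_cong) (simp_all add: S_Gv[symmetric] Gv_def)
  finally show ?thesis .
qed

lemma Gblk_genmom: "Gblk mu ws a = genmom M S ws a"
  unfolding Gblk_def genmom_def
proof (rule prod.cong[OF refl])
  fix B
  have "Gv mu (map (blockword ws B) [0..<length ws]) = integral\<^sup>L M (\<lambda>\<omega>. \<Prod>j\<in>{..<length ws}. S \<omega> (blockword ws B j))"
    by (simp add: Gv_mu prod_list_map_upt o_def)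
  also have "\<dots> = integral\<^sup>L M (\<lambda>\<omega>. \<Prod>j\<in>{j. j < length ws \<and> (\<exists>p. (j, p) \<in> B)}. S \<omega> (blockword ws B j))"
  proof (rule Bochner_Integration.integral_cong[OF refl])
    fix \<omega> assume \<omega>: "\<omega> \<in> space M"
    show "(\<Prod>j\<in>{..<length ws}. S \<omega> (blockword ws B j)) = (\<Prod>j\<in>{j. j < length ws \<and> (\<exists>p. (j, p) \<in> B)}. S \<omega> (blockword ws B j))"
    proof (rule prod.mono_neutral_right)
      show "\<forall>i\<in>{..<length ws} - {j. j < length ws \<and> (\<exists>p. (j, p) \<in> B)}. S \<omega> (blockword ws B i) = 1"
        using S_nil[OF \<omega>] by (auto simp: blockword_empty)
    qed auto
  qed
  finally show "Gv mu (map (blockword ws B) [0..<length ws]) = integral\<^sup>L M (\<lambda>\<omega>. \<Prod>j\<in>{j. j < length ws \<and> (\<exists>p. (j, p) \<in> B)}. S \<omega> (blockword ws B j))" .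
qed

lemma part1:
  assumes "taus \<noteq> []" "\<forall>\<tau>\<in>set taus. \<tau> \<noteq> []"
  shows "tpair (tlog mu) (shuffle_list (map ew taus)) =
        (\<Sum>a\<in>Orp (wposet taus) wle.
           (-1) ^ (card a - 1) * real (opfact (wposet taus) wle a) / real (card a)
           * genmom M S taus a)"
proof -
  have ne: "wposet taus \<noteq> {}"
  proof -
    obtain t ts where "taus = t # ts" using assms(1) by (cases taus) auto
    with assms(2) have "(0, 0) \<in> wposet taus" by (auto simp: wposet_def)
    then show ?thesis by auto
  qed
  have "tpair (tlog mu) (shuffle_list (map ew taus)) = Gv (tlog mu) taus"
    by (simp add: tpair_SL[symmetric] SL_def)
  also have "\<dots> = (\<Sum>a\<in>Orp (wposet taus) wle.
           (-1) ^ (card a - 1) * real (opfact (wposet taus) wle a) / real (card a) * Gblk mu taus a)"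
    by (rule part1_alg[of mu, OF mu_nil ne])
  finally show ?thesis by (simp add: Gblk_genmom)
qed

end

lemma tpow_add: "tpow y (m + n) = tmul (tpow y m) (tpow y n)" for y :: "'d list \<Rightarrow> real"
  by (induction m) (simp_all add: tmul_tone_left tmul_assoc tpow.simps(2))

definition Phi :: "('d list \<Rightarrow> real) \<Rightarrow> real fps \<Rightarrow> 'd list \<Rightarrow> real" where
  "Phi y F w = (\<Sum>n\<le>length w. fps_nth F n * tpow y n w)"

lemma Phi_N:
  fixes y :: "'d list \<Rightarrow> real"
  assumes y0: "y [] = 0" and w: "length w \<le> N"
  shows "Phi y F w = (\<Sum>n\<le>N. fps_nth F n * tpow y n w)"
  unfolding Phi_def
proof (rule sum.mono_neutral_left)
  show "\<forall>i\<in>{..N} - {..length w}. fps_nth F i * tpow y i w = 0"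
    using tpow_vanish[of y, OF y0] by auto
qed (use w in auto)

lemma Phi_mult:
  fixes y :: "'d list \<Rightarrow> real"
  assumes y0: "y [] = 0"
  shows "Phi y (F * G) = tmul (Phi y F) (Phi y G)"
proof
  fix w :: "'d list"
  define N where "N = length w"
  have "tmul (Phi y F) (Phi y G) w = (\<Sum>k\<le>N. (\<Sum>i\<le>N. fps_nth F i * tpow y i (take k w)) * (\<Sum>j\<le>N. fps_nth G j * tpow y j (drop k w)))"
    unfolding tmul_def N_def by (intro sum.cong refl arg_cong2[where f="(*)"] Phi_N[of y, OF y0]) auto
  also have "\<dots> = (\<Sum>k\<le>N. \<Sum>i\<le>N. \<Sum>j\<le>N. fps_nth F i * fps_nth G j * (tpow y i (take k w) * tpow y j (drop k w)))"
    by (simp add: sum_product mult_ac)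
  also have "\<dots> = (\<Sum>i\<le>N. \<Sum>k\<le>N. \<Sum>j\<le>N. fps_nth F i * fps_nth G j * (tpow y i (take k w) * tpow y j (drop k w)))"
    by (rule sum.swap)
  also have "\<dots> = (\<Sum>i\<le>N. \<Sum>j\<le>N. \<Sum>k\<le>N. fps_nth F i * fps_nth G j * (tpow y i (take k w) * tpow y j (drop k w)))"
    by (rule sum.cong[OF refl], rule sum.swap)
  also have "\<dots> = (\<Sum>i\<le>N. \<Sum>j\<le>N. fps_nth F i * fps_nth G j * (\<Sum>k\<le>N. tpow y i (take k w) * tpow y j (drop k w)))"
    by (simp add: sum_distrib_left)
  also have "\<dots> = (\<Sum>i\<le>N. \<Sum>j\<le>N. fps_nth F i * fps_nth G j * tpow y (i + j) w)"
    by (simp add: tpow_add tmul_def N_def)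
  also have "\<dots> = (\<Sum>(i, j)\<in>{(i, j). i + j \<le> N}. fps_nth F i * fps_nth G j * tpow y (i + j) w)"
  proof -
    have "(\<Sum>i\<le>N. \<Sum>j\<le>N. fps_nth F i * fps_nth G j * tpow y (i + j) w) = (\<Sum>(i, j)\<in>{..N} \<times> {..N}. fps_nth F i * fps_nth G j * tpow y (i + j) w)"
      by (simp add: sum.cartesian_product)
    also have "\<dots> = (\<Sum>(i, j)\<in>{(i, j). i + j \<le> N}. fps_nth F i * fps_nth G j * tpow y (i + j) w)"
    proof (rule sum.mono_neutral_right)
      show "\<forall>p\<in>{..N} \<times> {..N} - {(i, j). i + j \<le> N}. (case p of (i, j) \<Rightarrow> fps_nth F i * fps_nth G j * tpow y (i + j) w) = 0"
        using tpow_vanish[of y, OF y0] by (auto simp: N_def) (meson not_le)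
    qed auto
    finally show ?thesis .
  qed
  also have "\<dots> = (\<Sum>k\<le>N. \<Sum>i\<le>k. fps_nth F i * fps_nth G (k - i) * tpow y k w)"
    by (subst sum.triangle_reindex_eq) simp
  also have "\<dots> = Phi y (F * G) w"
    by (simp add: Phi_def N_def fps_mult_nth sum_distrib_right atLeast0AtMost)
  finally show "Phi y (F * G) w = tmul (Phi y F) (Phi y G) w" ..
qed

lemma Phi_one: "Phi y 1 = tone" for y :: "'d list \<Rightarrow> real"
proof
  fix w :: "'d list"
  have "Phi y 1 w = (\<Sum>n\<le>length w. if n = 0 then tone w else 0)"
    unfolding Phi_def by (intro sum.cong refl) auto
  then show "Phi y 1 w = tone w" by simp
qed

lemma Phi_power:
  fixes y :: "'d list \<Rightarrow> real"
  assumes y0: "y [] = 0"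
  shows "Phi y (F ^ n) = tpow (Phi y F) n"
  by (induction n) (simp_all add: Phi_one Phi_mult[of y, OF y0] tpow.simps(2))

lemma Phi_X:
  fixes y :: "'d list \<Rightarrow> real"
  assumes y0: "y [] = 0"
  shows "Phi y fps_X = y"
proof
  fix w :: "'d list"
  show "Phi y fps_X w = y w"
  proof (cases w)
    case Nil then show ?thesis using y0 by (simp add: Phi_def)
  next
    case (Cons a v)
    have "Phi y fps_X w = (\<Sum>n\<le>length w. if n = 1 then tpow y 1 w else 0)"
      unfolding Phi_def by (intro sum.cong refl) (auto simp: fps_X_def)
    also have "\<dots> = tpow y 1 w" by (subst sum.delta) (use Cons in auto)
    finally show ?thesis by (simp add: tpow.simps(2) tmul_tone_right)
  qed
qed

lemma Phi_add: "Phi y (F + G) = (\<lambda>w. Phi y F w + Phi y G w)"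
  by (rule ext) (simp add: Phi_def algebra_simps sum.distrib)

lemma tlog_Phi:
  fixes \<mu> :: "'d list \<Rightarrow> real"
  assumes m0: "\<mu> [] = 1"
  shows "tlog \<mu> = Phi (ymu \<mu>) (fps_ln 1)"
proof
  fix w :: "'d list"
  have "tlog \<mu> w = (\<Sum>n<length w. (-1) ^ n / real (Suc n) * tpow (ymu \<mu>) (Suc n) w)"
    by (rule tlog_fin[of \<mu>, OF m0]) simp
  also have "\<dots> = (\<Sum>m\<in>{1..length w}. fps_nth (fps_ln 1) m * tpow (ymu \<mu>) m w)"
    by (rule sum.reindex_bij_witness[where i = "\<lambda>m. m - 1" and j = Suc]) (auto simp: fps_ln_nth)
  also have "\<dots> = (\<Sum>m\<le>length w. fps_nth (fps_ln 1) m * tpow (ymu \<mu>) m w)"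
    by (rule sum.mono_neutral_left) (auto simp: fps_ln_nth)
  finally show "tlog \<mu> w = Phi (ymu \<mu>) (fps_ln 1) w" by (simp add: Phi_def)
qed

lemma exp_ln_fps: "fps_exp (1::real) oo fps_ln 1 = 1 + fps_X"
proof -
  have b0: "fps_nth (fps_exp (1::real) - 1) 0 = 0" by simp
  have b1: "fps_nth (fps_exp (1::real) - 1) 1 \<noteq> 0" by simp
  have "(fps_exp (1::real) - 1) oo fps_ln 1 = fps_X"
    using fps_inv_right[OF b0 b1] fps_ln_fps_exp_inv[of "1::real"] by simp
  then have "(fps_exp 1 oo fps_ln 1) - 1 = (fps_X :: real fps)"
    by (simp add: fps_compose_sub_distrib)
  then show ?thesis by (simp add: algebra_simps)
qed

lemma exp_log_tensor:
  fixes \<mu> :: "'d list \<Rightarrow> real"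
  assumes m0: "\<mu> [] = 1" and w: "length w \<le> N"
  shows "\<mu> w = (\<Sum>n\<le>N. 1 / fact n * tpow (tlog \<mu>) n w)"
proof -
  let ?y = "ymu \<mu>" and ?L = "fps_ln (1::real)"
  have y0: "?y [] = 0" using ymu_nil[of \<mu>, OF m0] .
  have "(\<Sum>n\<le>N. 1 / fact n * tpow (tlog \<mu>) n w) = (\<Sum>n\<le>N. 1 / fact n * (\<Sum>m\<le>N. fps_nth (?L ^ n) m * tpow ?y m w))"
    by (simp add: tlog_Phi[of \<mu>, OF m0] Phi_power[of "ymu \<mu>", OF y0, symmetric] Phi_N[of "ymu \<mu>", OF y0 w])
  also have "\<dots> = (\<Sum>m\<le>N. (\<Sum>n\<le>N. 1 / fact n * fps_nth (?L ^ n) m) * tpow ?y m w)"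
    by (simp add: sum_distrib_left sum_distrib_right mult_ac, rule sum.swap)
  also have "\<dots> = (\<Sum>m\<le>N. fps_nth (fps_exp 1 oo ?L) m * tpow ?y m w)"
  proof (rule sum.cong[OF refl])
    fix m assume m: "m \<in> {..N}"
    have "(\<Sum>n\<le>N. 1 / fact n * fps_nth (?L ^ n) m) = (\<Sum>n\<in>{0..m}. 1 / fact n * fps_nth (?L ^ n) m)"
    proof (rule sum.mono_neutral_right)
      show "\<forall>i\<in>{..N} - {0..m}. 1 / fact i * fps_nth (?L ^ i) m = 0"
        using startsby_zero_power_prefix[of ?L] by auto
    qed (use m in auto)
    then show "(\<Sum>n\<le>N. 1 / fact n * fps_nth (?L ^ n) m) * tpow ?y m w = fps_nth (fps_exp 1 oo ?L) m * tpow ?y m w"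
      by (simp add: fps_compose_nth)
  qed
  also have "\<dots> = Phi ?y (fps_exp 1 oo ?L) w" by (simp add: Phi_N[of "ymu \<mu>", OF y0 w])
  also have "\<dots> = tone w + ymu \<mu> w" by (simp add: exp_ln_fps Phi_add Phi_one Phi_X[of "ymu \<mu>", OF y0])
  also have "\<dots> = \<mu> w" by (simp add: ymu_def)
  finally show ?thesis ..
qed

lemma kernel_alt: "kernel P f = (\<lambda>x. {y \<in> P. f y = f x}) ` P"
  by (auto simp: kernel_def)

lemma fiber_eq_of_kernel_eq:
  assumes k: "kernel P f1 = kernel P f2" and x: "x \<in> P" and y: "y \<in> P"
  shows "f1 y = f1 x \<longleftrightarrow> f2 y = f2 x"
proof -
  have "{z \<in> P. f1 z = f1 x} \<in> kernel P f2" using k x by (auto simp: kernel_alt)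
  then obtain x' where x': "x' \<in> P" "{z \<in> P. f1 z = f1 x} = {z \<in> P. f2 z = f2 x'}" by (auto simp: kernel_alt)
  have "x \<in> {z \<in> P. f2 z = f2 x'}" using x'(2) x by blast
  then have "f2 x = f2 x'" by simp
  then have "{z \<in> P. f1 z = f1 x} = {z \<in> P. f2 z = f2 x}" using x' by simp
  then show ?thesis using y by blast
qed

lemma card_img_fib:
  assumes "finite P" "Y \<subseteq> P"
  shows "card (f ` Y) = card ((\<lambda>y. {z \<in> P. f z = f y}) ` Y)"
proof -
  have "(\<lambda>y. {z \<in> P. f z = f y}) ` Y = (\<lambda>v. {z \<in> P. f z = v}) ` (f ` Y)" by auto
  moreover have "inj_on (\<lambda>v. {z \<in> P. f z = v}) (f ` Y)"
  proof (rule inj_onI)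
    fix u v assume "u \<in> f ` Y" "v \<in> f ` Y" and e: "{z \<in> P. f z = u} = {z \<in> P. f z = v}"
    then obtain y where "y \<in> Y" "f y = u" by auto
    then have "y \<in> {z \<in> P. f z = u}" using assms by auto
    then show "u = v" using e \<open>f y = u\<close> by auto
  qed
  ultimately show ?thesis by (simp add: card_image)
qed

lemma chain_unique:
  assumes fin: "finite P" and tot: "\<And>x y. x \<in> P \<Longrightarrow> y \<in> P \<Longrightarrow> le x y \<or> le y x"
    and o1: "order_pres P le f1" and o2: "order_pres P le f2"
    and k: "kernel P f1 = kernel P f2"
    and s1: "f1 ` P = {1..m}" and s2: "f2 ` P = {1..m}"
    and x: "x \<in> P"
  shows "f1 x = f2 x"
proof -
  have ord: "f1 y \<le> f1 x \<Longrightarrow> f2 y \<le> f2 x" if "x \<in> P" "y \<in> P" "order_pres P le f1" "order_pres P le f2"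
    "kernel P f1 = kernel P f2" for f1 f2 x y
  proof -
    assume le1: "f1 y \<le> f1 x"
    show ?thesis
    proof (cases "f1 y = f1 x")
      case True then show ?thesis using fiber_eq_of_kernel_eq[OF that(5) that(1) that(2)] by simp
    next
      case False
      then have "f1 y < f1 x" using le1 by simp
      then have "\<not> le x y" using that(1,2,3) unfolding order_pres_def by (meson not_le)
      then have "le y x" using tot that(1,2) by blast
      then show ?thesis using that(1,2,4) unfolding order_pres_def by blast
    qed
  qed
  define Y where "Y = {y \<in> P. f1 y \<le> f1 x}"
  have Y2: "Y = {y \<in> P. f2 y \<le> f2 x}"
    unfolding Y_def using ord[OF x _ o1 o2 k] ord[OF x _ o2 o1 k[symmetric]] by blast
  have img: "f ` {y \<in> P. f y \<le> f x} = {1..f x}" if "f ` P = {1..m}" for f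
  proof
    show "f ` {y \<in> P. f y \<le> f x} \<subseteq> {1..f x}" using that by force
    show "{1..f x} \<subseteq> f ` {y \<in> P. f y \<le> f x}"
    proof
      fix v assume v: "v \<in> {1..f x}"
      have "f x \<in> {1..m}" using that x by blast
      then have "v \<in> f ` P" using v that by auto
      then show "v \<in> f ` {y \<in> P. f y \<le> f x}" using v by auto
    qed
  qed
  have "f1 x = card (f1 ` Y)" using img[OF s1] by (simp add: Y_def)
  also have "\<dots> = card ((\<lambda>y. {z \<in> P. f1 z = f1 y}) ` Y)" by (rule card_img_fib[OF fin]) (auto simp: Y_def)
  also have "(\<lambda>y. {z \<in> P. f1 z = f1 y}) ` Y = (\<lambda>y. {z \<in> P. f2 z = f2 y}) ` Y"
  proof (rule image_cong[OF refl])
    fix y assume "y \<in> Y"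
    then have y: "y \<in> P" by (simp add: Y_def)
    show "{z \<in> P. f1 z = f1 y} = {z \<in> P. f2 z = f2 y}"
      using fiber_eq_of_kernel_eq[OF k y] by blast
  qed
  also have "card \<dots> = card (f2 ` Y)" by (rule card_img_fib[OF fin, symmetric]) (auto simp: Y_def)
  also have "\<dots> = f2 x" using img[OF s2] by (simp add: Y2)
  finally show ?thesis .
qed

lemma opfact_chain:
  fixes \<tau> :: "'d list"
  assumes a: "a \<in> Orp (wposet [\<tau>]) wle"
  shows "opfact (wposet [\<tau>]) wle a = 1"
proof -
  let ?P = "wposet [\<tau>]"
  have tot: "wle x y \<or> wle y x" if "x \<in> ?P" "y \<in> ?P" for x y
    using that by (auto simp: wposet_def wle_def)
  obtain g where g: "order_pres ?P wle g" and ka: "a = kernel ?P g" using a by (auto simp: Orp_def)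
  define V where "V = g ` ?P"
  have finV: "finite V" by (simp add: V_def)
  define r where "r v = card {u \<in> V. u \<le> v}" for v
  define f where "f = restrict (\<lambda>x. r (g x)) ?P"
  have cardV: "card V = card a" using card_kernel[OF finite_wposet, of "[\<tau>]" g] ka by (simp add: V_def)
  have r_mono: "u \<le> v \<Longrightarrow> r u \<le> r v" for u v
    unfolding r_def by (rule card_mono) (auto simp: finV)
  have r_strict: "r u < r v" if uv: "u \<in> V" "v \<in> V" "u < v" for u v
  proof -
    have "{w \<in> V. w \<le> u} \<subseteq> {w \<in> V. w \<le> v}" using uv by auto
    moreover have "v \<in> {w \<in> V. w \<le> v}" "v \<notin> {w \<in> V. w \<le> u}" using uv by auto
    ultimately have "{w \<in> V. w \<le> u} \<subset> {w \<in> V. w \<le> v}" by blast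
    then show ?thesis unfolding r_def by (intro psubset_card_mono) (simp_all add: finV)
  qed
  have r_inj: "u \<in> V \<Longrightarrow> v \<in> V \<Longrightarrow> r u = r v \<Longrightarrow> u = v" for u v
    using r_strict by (metis linorder_neqE_nat less_irrefl_nat)
  have r_range: "v \<in> V \<Longrightarrow> r v \<in> {1..card V}" for v
  proof -
    assume v: "v \<in> V"
    have "r v \<le> card V" unfolding r_def by (rule card_mono) (auto simp: finV)
    moreover have "r v \<noteq> 0" using v finV unfolding r_def by (auto simp: card_eq_0_iff)
    ultimately show ?thesis by simp
  qed
  have fFA: "f \<in> FA [\<tau>] a"
    unfolding FA_def
  proof (intro CollectI conjI)
    show "f \<in> ?P \<rightarrow>\<^sub>E {1..card a}" using r_range cardV by (auto simp: f_def V_def)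
    show "order_pres ?P wle f" using g r_mono unfolding order_pres_def f_def by auto
    show "kernel ?P f = a" unfolding ka kernel_alt
    proof (rule image_cong[OF refl])
      fix x assume x: "x \<in> ?P"
      show "{y \<in> ?P. f y = f x} = {y \<in> ?P. g y = g x}"
        using x r_inj by (auto simp: f_def V_def)
    qed
  qed
  have uniq: "f' = f" if f'A: "f' \<in> FA [\<tau>] a" for f'
  proof
    fix x
    show "f' x = f x"
    proof (cases "x \<in> ?P")
      case False
      then show ?thesis using f'A fFA unfolding FA_def by (cases x) (auto simp: PiE_def extensional_def)
    next
      case True
      have s: "h ` ?P = {1..card a}" if hA: "h \<in> FA [\<tau>] a" for h
        using FA_OPs[OF hA] by (simp add: OPs_def)
      have k: "kernel ?P f' = kernel ?P f" using f'A fFA by (simp add: FA_def)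
      have o1: "order_pres ?P wle f'" and o2: "order_pres ?P wle f" using f'A fFA by (simp_all add: FA_def)
      show ?thesis
        by (rule chain_unique[OF finite_wposet tot o1 o2 k s[OF f'A] s[OF fFA] True])
    qed
  qed
  have "FA [\<tau>] a = {f}" using fFA uniq by blast
  then show ?thesis by (simp add: opfact_FA)
qed

lemma tlog_nil: "\<mu> [] = 1 \<Longrightarrow> tlog \<mu> [] = (0::real)"
  for \<mu> :: "'d list \<Rightarrow> real"
  using tlog_fin[of \<mu> "[]" 0] by simp

lemma Gv_tpow_surj:
  fixes \<kappa> :: "'d::finite list \<Rightarrow> real"
  assumes k0: "\<kappa> [] = 0"
  shows "Gv (tpow \<kappa> m) ws = (\<Sum>f\<in>OPs ws m. Gblk \<kappa> ws (kernel (wposet ws) f))"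
proof -
  have "Gv (tpow \<kappa> m) ws = (\<Sum>f\<in>OP ws m. \<Prod>i\<in>{1..m}. Gv \<kappa> (piece ws f i))"
    by (rule Gv_tpow)
  also have "\<dots> = (\<Sum>f\<in>OPs ws m. \<Prod>i\<in>{1..m}. Gv \<kappa> (piece ws f i))"
  proof (rule sum.mono_neutral_right)
    show "OPs ws m \<subseteq> OP ws m" by (auto simp: OPs_def)
    show "\<forall>f\<in>OP ws m - OPs ws m. (\<Prod>i\<in>{1..m}. Gv \<kappa> (piece ws f i)) = 0"
    proof
      fix f assume f: "f \<in> OP ws m - OPs ws m"
      then have "f ` wposet ws \<noteq> {1..m}" by (auto simp: OPs_def)
      moreover have "f ` wposet ws \<subseteq> {1..m}" using f OP_vals by blast
      ultimately obtain i where i: "i \<in> {1..m}" "i \<notin> f ` wposet ws" by blast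
      then have "fib ws f i = {}" by (auto simp: fib_def)
      then have "Gv \<kappa> (piece ws f i) = 0"
        using piece_empty_iff[of ws f i] by (simp add: Gv_all_empty k0)
      then show "(\<Prod>i\<in>{1..m}. Gv \<kappa> (piece ws f i)) = 0"
        using i(1) by (metis finite_atLeastAtMost prod_zero_iff)
    qed
  qed simp
  also have "\<dots> = (\<Sum>f\<in>OPs ws m. Gblk \<kappa> ws (kernel (wposet ws) f))"
    by (intro sum.cong refl prod_piece_kernel)
  finally show ?thesis .
qed

lemma part2_alg:
  fixes \<mu> :: "'d::finite list \<Rightarrow> real"
  assumes m0: "\<mu> [] = 1" and ne: "\<tau> \<noteq> []"
  shows "tpair \<mu> (ew \<tau>) = (\<Sum>a\<in>Orp (wposet [\<tau>]) wle.
           1 / fact (card a) * (\<Prod>B\<in>a. tpair (tlog \<mu>) (ew (blockword [\<tau>] B 0))))"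
proof -
  let ?k = "tlog \<mu>"
  have k0: "?k [] = 0" by (rule tlog_nil[of \<mu>, OF m0])
  have Pne: "wposet [\<tau>] \<noteq> {}" using ne by (auto simp: wposet_def)
  have L: "lsum [\<tau>] = length \<tau>" by simp
  have "tpair \<mu> (ew \<tau>) = (\<Sum>n\<le>length \<tau>. 1 / fact n * tpow ?k n \<tau>)"
    unfolding tpair_ew by (rule exp_log_tensor[of \<mu>, OF m0]) simp
  also have "\<dots> = (\<Sum>n\<in>{1..length \<tau>}. 1 / fact n * tpow ?k n \<tau>)"
  proof (rule sum.mono_neutral_right)
    show "\<forall>i\<in>{..length \<tau>} - {1..length \<tau>}. 1 / fact i * tpow ?k i \<tau> = 0"
    proof
      fix i assume "i \<in> {..length \<tau>} - {1..length \<tau>}"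
      then have "i = 0" by auto
      then show "1 / fact i * tpow ?k i \<tau> = 0" using ne by (simp add: tone_def ew_def)
    qed
  qed auto
  also have "\<dots> = (\<Sum>n\<in>{1..lsum [\<tau>]}. 1 / fact n * (\<Sum>f\<in>OPs [\<tau>] n. Gblk ?k [\<tau>] (kernel (wposet [\<tau>]) f)))"
    by (simp only: L Gv_single[symmetric] Gv_tpow_surj[of "tlog \<mu>", OF k0])
  also have "\<dots> = (\<Sum>a\<in>Orp (wposet [\<tau>]) wle. 1 / fact (card a) * real (opfact (wposet [\<tau>]) wle a) * Gblk ?k [\<tau>] a)"
    by (rule regroup[OF Pne])
  also have "\<dots> = (\<Sum>a\<in>Orp (wposet [\<tau>]) wle. 1 / fact (card a) * (\<Prod>B\<in>a. tpair ?k (ew (blockword [\<tau>] B 0))))"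
    by (intro sum.cong refl) (simp add: opfact_chain Gblk_def Gv_single tpair_ew)
  finally show ?thesis .
qed

fun pow2 :: "('d list \<Rightarrow> 'd list \<Rightarrow> real) \<Rightarrow> nat \<Rightarrow> 'd list \<Rightarrow> 'd list \<Rightarrow> real" where
  "pow2 F 0 u v = (if u = [] \<and> v = [] then 1 else 0)"
| "pow2 F (Suc n) u v = (\<Sum>i\<le>length u. \<Sum>j\<le>length v. F (take i u) (take j v) * pow2 F n (drop i u) (drop j v))"

lemma splits_pair: "(\<Sum>c\<in>splits [u, v]. g c) = (\<Sum>i\<le>length u. \<Sum>j\<le>length v. g [i, j])"
  by (simp add: sum_splits_Cons)

lemma D_pow:
  fixes y :: "'d::finite list \<Rightarrow> real"
  shows "Gv (tpow y n) [u, v] = pow2 (\<lambda>u v. Gv y [u, v]) n u v"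
proof (induction n arbitrary: u v)
  case 0
  show ?case by (simp add: tone_def[symmetric] Gv_tone)
next
  case (Suc n)
  show ?case by (simp add: tpow.simps(2) Gv_tmul splits_pair Suc.IH)
qed

lemma pow2_one: "pow2 F (Suc 0) u v = F u v"
proof -
  have "pow2 F (Suc 0) u v = (\<Sum>i\<le>length u. \<Sum>j\<le>length v. if i = length u \<and> j = length v then F u v else 0)"
    unfolding pow2.simps by (intro sum.cong refl) auto
  also have "\<dots> = (\<Sum>i\<le>length u. if i = length u then F u v else 0)"
    by (intro sum.cong refl, rename_tac i, case_tac "i = length u") (simp_all add: sum.delta)
  also have "\<dots> = F u v" by (simp add: sum.delta)
  finally show ?thesis .
qed

lemma pow2_nil: "F [] [] = 0 \<Longrightarrow> pow2 F (Suc n) [] [] = 0"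
  by simp

definition cls :: "'d set \<Rightarrow> 'd list set" where "cls I = {w. set w \<subseteq> I}"

lemma cls_take: "w \<in> cls I \<Longrightarrow> take k w \<in> cls I"
  by (auto simp: cls_def dest: in_set_takeD)
lemma cls_drop: "w \<in> cls I \<Longrightarrow> drop k w \<in> cls I"
  by (auto simp: cls_def dest: in_set_dropD)
lemma cls_nil[simp]: "[] \<in> cls I" by (simp add: cls_def)

lemma pow2_local:
  assumes agree: "\<And>u' v'. u' \<in> cls I \<Longrightarrow> v' \<in> cls J \<Longrightarrow> length u' + length v' < K \<Longrightarrow> F u' v' = G u' v'"
  shows "u \<in> cls I \<Longrightarrow> v \<in> cls J \<Longrightarrow> length u + length v < K \<Longrightarrow> pow2 F n u v = pow2 G n u v"
proof (induction n arbitrary: u v)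
  case 0 then show ?case by simp
next
  case (Suc n)
  show ?case unfolding pow2.simps
  proof (intro sum.cong refl arg_cong2[where f = "(*)"])
    fix i j
    show "F (take i u) (take j v) = G (take i u) (take j v)"
      using Suc.prems by (intro agree cls_take) auto
    show "pow2 F n (drop i u) (drop j v) = pow2 G n (drop i u) (drop j v)"
      using Suc.prems by (intro Suc.IH cls_drop) auto
  qed
qed

lemma pow2_top:
  assumes agree: "\<And>u' v'. u' \<in> cls I \<Longrightarrow> v' \<in> cls J \<Longrightarrow> length u' + length v' < K \<Longrightarrow> F u' v' = G u' v'"
    and F0: "F [] [] = 0" and G0: "G [] [] = 0"
    and u: "u \<in> cls I" and v: "v \<in> cls J" and K: "length u + length v \<le> K"
  shows "pow2 F (Suc (Suc n)) u v = pow2 G (Suc (Suc n)) u v"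
  unfolding pow2.simps(2)[of _ "Suc n"]
proof (intro sum.cong refl)
  fix i j assume i: "i \<in> {..length u}" and j: "j \<in> {..length v}"
  show "F (take i u) (take j v) * pow2 F (Suc n) (drop i u) (drop j v) = G (take i u) (take j v) * pow2 G (Suc n) (drop i u) (drop j v)"
  proof (cases "i = 0 \<and> j = 0")
    case True then show ?thesis using F0 G0 by simp
  next
    case False
    then have dl: "length (drop i u) + length (drop j v) < K" using i j K by auto
    have pe: "pow2 F (Suc n) (drop i u) (drop j v) = pow2 G (Suc n) (drop i u) (drop j v)"
      by (rule pow2_local[OF agree cls_drop[OF u] cls_drop[OF v] dl])
    show ?thesis
    proof (cases "i = length u \<and> j = length v")
      case True then show ?thesis using F0 G0 by simp
    next
      case False
      then have "length (take i u) + length (take j v) < K" using i j K by auto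
      then have "F (take i u) (take j v) = G (take i u) (take j v)"
        by (intro agree cls_take u v)
      then show ?thesis using pe by simp
    qed
  qed
qed

lemma if0_mult: "(if c then a else 0) * (p::real) = (if c then a * p else 0)" by simp

definition Zf :: "('d list \<Rightarrow> real) \<Rightarrow> 'd list \<Rightarrow> 'd list \<Rightarrow> real" where
  "Zf \<kappa> u v = (if v = [] then \<kappa> u else 0) + (if u = [] then \<kappa> v else 0)"

lemma binom_step:
  fixes a b :: "nat \<Rightarrow> real"
  shows "(\<Sum>k\<le>n. real (n choose k) * a (Suc k) * b (n - k)) + (\<Sum>k\<le>n. real (n choose k) * a k * b (Suc n - k))
       = (\<Sum>k\<le>Suc n. real (Suc n choose k) * a k * b (Suc n - k))"
proof -
  have h1: "(\<Sum>k\<le>Suc n. real (Suc n choose k) * a k * b (Suc n - k))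
      = a 0 * b (Suc n) + (\<Sum>k\<le>n. real (Suc n choose Suc k) * a (Suc k) * b (n - k))"
    by (simp add: sum.atMost_Suc_shift del: sum.atMost_Suc)
  have h2: "(\<Sum>k\<le>n. real (Suc n choose Suc k) * a (Suc k) * b (n - k))
      = (\<Sum>k\<le>n. real (n choose k) * a (Suc k) * b (n - k)) + (\<Sum>k\<le>n. real (n choose Suc k) * a (Suc k) * b (n - k))"
    by (simp add: sum.distrib algebra_simps)
  have h3: "(\<Sum>k\<le>Suc n. real (n choose k) * a k * b (Suc n - k))
      = a 0 * b (Suc n) + (\<Sum>k\<le>n. real (n choose Suc k) * a (Suc k) * b (n - k))"
    by (simp add: sum.atMost_Suc_shift del: sum.atMost_Suc)
  have h4: "(\<Sum>k\<le>Suc n. real (n choose k) * a k * b (Suc n - k)) = (\<Sum>k\<le>n. real (n choose k) * a k * b (Suc n - k))"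
    by simp
  show ?thesis using h1 h2 h3 h4 by linarith
qed

lemma tmul_kappa: "(\<Sum>i\<le>length u. \<kappa> (take i u) * tpow \<kappa> k (drop i u)) = tpow \<kappa> (Suc k) u"
  by (simp add: tpow.simps(2) tmul_def)

lemma pow2_Z:
  fixes \<kappa> :: "'d list \<Rightarrow> real"
  assumes k0: "\<kappa> [] = 0"
  shows "pow2 (Zf \<kappa>) n u v = (\<Sum>k\<le>n. real (n choose k) * tpow \<kappa> k u * tpow \<kappa> (n - k) v)"
proof (induction n arbitrary: u v)
  case 0
  show ?case by (simp add: tone_def ew_def)
next
  case (Suc n)
  have Zsplit: "Zf \<kappa> (take i u) (take j v) = (if j = 0 then \<kappa> (take i u) else 0) + (if i = 0 then \<kappa> (take j v) else 0)"
    if "i \<le> length u" "j \<le> length v" for i j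
    using that k0 by (auto simp: Zf_def)
  have "pow2 (Zf \<kappa>) (Suc n) u v = (\<Sum>i\<le>length u. \<Sum>j\<le>length v.
      ((if j = 0 then \<kappa> (take i u) else 0) + (if i = 0 then \<kappa> (take j v) else 0)) * pow2 (Zf \<kappa>) n (drop i u) (drop j v))"
    by (simp add: Zsplit)
  also have "\<dots> = (\<Sum>i\<le>length u. \<kappa> (take i u) * pow2 (Zf \<kappa>) n (drop i u) v)
      + (\<Sum>j\<le>length v. \<kappa> (take j v) * pow2 (Zf \<kappa>) n u (drop j v))"
  proof -
    let ?p = "\<lambda>i j. pow2 (Zf \<kappa>) n (drop i u) (drop j v)"
    have "(\<Sum>i\<le>length u. \<Sum>j\<le>length v.
      ((if j = 0 then \<kappa> (take i u) else 0) + (if i = 0 then \<kappa> (take j v) else 0)) * ?p i j)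
      = (\<Sum>i\<le>length u. \<Sum>j\<le>length v. (if j = 0 then \<kappa> (take i u) * ?p i j else 0))
      + (\<Sum>i\<le>length u. \<Sum>j\<le>length v. (if i = 0 then \<kappa> (take j v) * ?p i j else 0))"
      by (simp only: distrib_right sum.distrib if0_mult)
    also have "(\<Sum>i\<le>length u. \<Sum>j\<le>length v. (if j = 0 then \<kappa> (take i u) * ?p i j else 0))
       = (\<Sum>i\<le>length u. \<kappa> (take i u) * ?p i 0)"
      by (intro sum.cong refl) (simp add: sum.delta)
    also have "(\<Sum>i\<le>length u. \<Sum>j\<le>length v. (if i = 0 then \<kappa> (take j v) * ?p i j else 0))
       = (\<Sum>j\<le>length v. \<Sum>i\<le>length u. (if i = 0 then \<kappa> (take j v) * ?p i j else 0))"
      by (rule sum.swap)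
    also have "\<dots> = (\<Sum>j\<le>length v. \<kappa> (take j v) * ?p 0 j)"
      by (intro sum.cong refl) (simp add: sum.delta)
    finally show ?thesis by simp
  qed
  also have "(\<Sum>i\<le>length u. \<kappa> (take i u) * pow2 (Zf \<kappa>) n (drop i u) v)
      = (\<Sum>k\<le>n. real (n choose k) * tpow \<kappa> (Suc k) u * tpow \<kappa> (n - k) v)"
    by (simp add: Suc.IH sum_distrib_left sum.swap[of _ "{..length u}"] mult_ac tmul_kappa[symmetric]
         sum_distrib_right)
  also have "(\<Sum>j\<le>length v. \<kappa> (take j v) * pow2 (Zf \<kappa>) n u (drop j v))
      = (\<Sum>k\<le>n. real (n choose k) * tpow \<kappa> k u * tpow \<kappa> (Suc n - k) v)"
  proof -
    have "(\<Sum>j\<le>length v. \<kappa> (take j v) * pow2 (Zf \<kappa>) n u (drop j v))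
      = (\<Sum>k\<le>n. real (n choose k) * tpow \<kappa> k u * (\<Sum>j\<le>length v. \<kappa> (take j v) * tpow \<kappa> (n - k) (drop j v)))"
      by (simp add: Suc.IH sum_distrib_left sum.swap[of _ "{..length v}"] mult_ac)
    also have "\<dots> = (\<Sum>k\<le>n. real (n choose k) * tpow \<kappa> k u * tpow \<kappa> (Suc n - k) v)"
      by (intro sum.cong refl) (simp add: tmul_kappa Suc_diff_le)
    finally show ?thesis .
  qed
  also have "(\<Sum>k\<le>n. real (n choose k) * tpow \<kappa> (Suc k) u * tpow \<kappa> (n - k) v) +
      (\<Sum>k\<le>n. real (n choose k) * tpow \<kappa> k u * tpow \<kappa> (Suc n - k) v)
      = (\<Sum>k\<le>Suc n. real (Suc n choose k) * tpow \<kappa> k u * tpow \<kappa> (Suc n - k) v)"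
    by (rule binom_step)
  finally show ?case .
qed

lemma X1:
  fixes \<mu> :: "'d::finite list \<Rightarrow> real"
  assumes m0: "\<mu> [] = 1" and N: "length u + length v \<le> N"
  shows "Gv \<mu> [u, v] = (\<Sum>n\<le>N. 1 / fact n * pow2 (\<lambda>u v. Gv (tlog \<mu>) [u, v]) n u v)"
proof -
  have "Gv \<mu> [u, v] = Gv (\<lambda>w. \<Sum>n\<le>N. 1 / fact n * tpow (tlog \<mu>) n w) [u, v]"
    by (rule Gv_cong, rule exp_log_tensor[of \<mu>, OF m0]) (use N in simp)
  also have "\<dots> = (\<Sum>n\<le>N. 1 / fact n * Gv (tpow (tlog \<mu>) n) [u, v])"
    by (subst Gv_sum, simp, intro sum.cong refl, rule Gv_scale)
  finally show ?thesis by (simp add: D_pow)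
qed

lemma X2:
  fixes \<mu> :: "'d list \<Rightarrow> real"
  assumes m0: "\<mu> [] = 1" and N: "length u + length v \<le> N"
  shows "\<mu> u * \<mu> v = (\<Sum>n\<le>N. 1 / fact n * pow2 (Zf (tlog \<mu>)) n u v)"
proof -
  let ?k = "tlog \<mu>"
  have k0: "?k [] = 0" by (rule tlog_nil[of \<mu>, OF m0])
  let ?g = "\<lambda>a b. 1 / fact a * tpow ?k a u * (1 / fact b * tpow ?k b v)"
  have "\<mu> u * \<mu> v = (\<Sum>a\<le>N. 1 / fact a * tpow ?k a u) * (\<Sum>b\<le>N. 1 / fact b * tpow ?k b v)"
    using exp_log_tensor[of \<mu> u N, OF m0] exp_log_tensor[of \<mu> v N, OF m0] N by simp
  also have "\<dots> = (\<Sum>(a, b)\<in>{..N} \<times> {..N}. ?g a b)"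
    by (simp add: sum_product sum.cartesian_product)
  also have "\<dots> = (\<Sum>(a, b)\<in>{(a, b). a + b \<le> N}. ?g a b)"
  proof (rule sum.mono_neutral_right)
    show "\<forall>p\<in>{..N} \<times> {..N} - {(a, b). a + b \<le> N}. (case p of (a, b) \<Rightarrow> ?g a b) = 0"
    proof
      fix p assume p: "p \<in> {..N} \<times> {..N} - {(a, b). a + b \<le> N}"
      obtain a b where ab: "p = (a, b)" by (cases p)
      then have "length u < a \<or> length v < b" using p N by auto
      then show "(case p of (a, b) \<Rightarrow> ?g a b) = 0"
        using ab tpow_vanish[of ?k, OF k0] by auto
    qed
  qed auto
  also have "\<dots> = (\<Sum>n\<le>N. \<Sum>k\<le>n. ?g k (n - k))"
    by (rule sum.triangle_reindex_eq)
  also have "\<dots> = (\<Sum>n\<le>N. 1 / fact n * pow2 (Zf ?k) n u v)"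
  proof (rule sum.cong[OF refl])
    fix n assume "n \<in> {..N}"
    have "1 / fact n * pow2 (Zf ?k) n u v = (\<Sum>k\<le>n. 1 / fact n * real (n choose k) * tpow ?k k u * tpow ?k (n - k) v)"
      by (simp add: pow2_Z[of ?k, OF k0] sum_distrib_left mult_ac)
    also have "\<dots> = (\<Sum>k\<le>n. ?g k (n - k))"
      by (intro sum.cong refl) (simp add: binomial_fact field_simps)
    finally show "(\<Sum>k\<le>n. ?g k (n - k)) = 1 / fact n * pow2 (Zf ?k) n u v" ..
  qed
  finally show ?thesis .
qed

lemma Gv_pair_nil_left: "Gv y [[], v] = y (v :: 'd::finite list)"
proof -
  have "SL [[], v] = SL [v]" by (simp add: SL_Cons shuffle_ew_nil_left)
  then show ?thesis by (metis tpair_SL Gv_single)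
qed

lemma Gv_pair_nil_right: "Gv y [u, []] = y (u :: 'd::finite list)"
proof -
  have "SL [u, []] = SL [u]" by (simp add: SL_Cons shuffle_ew_nil)
  then show ?thesis by (metis tpair_SL Gv_single)
qed

lemma lemmaB:
  fixes \<mu> :: "'d::finite list \<Rightarrow> real"
  assumes m0: "\<mu> [] = 1" and u: "u \<in> cls I" and v: "v \<in> cls J"
    and agree: "\<And>u' v'. u' \<in> cls I \<Longrightarrow> v' \<in> cls J \<Longrightarrow> length u' + length v' < length u + length v \<Longrightarrow>
        Gv (tlog \<mu>) [u', v'] = Zf (tlog \<mu>) u' v'"
  shows "Gv \<mu> [u, v] - \<mu> u * \<mu> v = Gv (tlog \<mu>) [u, v] - Zf (tlog \<mu>) u v"
proof -
  let ?k = "tlog \<mu>"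
  let ?D = "\<lambda>u v. Gv ?k [u, v]" and ?Z = "Zf ?k"
  have k0: "?k [] = 0" by (rule tlog_nil[of \<mu>, OF m0])
  define N where "N = length u + length v + 1"
  have D0: "?D [] [] = 0" using k0 by (simp add: Gv_pair_nil_left)
  have Z0: "?Z [] [] = 0" using k0 by (simp add: Zf_def)
  have "Gv \<mu> [u, v] - \<mu> u * \<mu> v = (\<Sum>n\<le>N. 1 / fact n * (pow2 ?D n u v - pow2 ?Z n u v))"
    by (simp add: X1[of \<mu> u v N, OF m0] X2[of \<mu> u v N, OF m0] N_def sum_subtractf right_diff_distrib)
  also have "\<dots> = (\<Sum>n\<le>N. if n = 1 then ?D u v - ?Z u v else 0)"
  proof (rule sum.cong[OF refl])
    fix n assume "n \<in> {..N}"
    show "1 / fact n * (pow2 ?D n u v - pow2 ?Z n u v) = (if n = 1 then ?D u v - ?Z u v else 0)"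
    proof (cases n)
      case 0 then show ?thesis by simp
    next
      case (Suc m)
      show ?thesis
      proof (cases m)
        case 0 then show ?thesis using Suc by (simp add: pow2_one del: pow2.simps)
      next
        case (Suc m')
        have "pow2 ?D (Suc (Suc m')) u v = pow2 ?Z (Suc (Suc m')) u v"
          by (rule pow2_top[where F = ?D and G = ?Z, OF agree D0 Z0 u v]) auto
        then show ?thesis using Suc \<open>n = Suc m\<close> by simp
      qed
    qed
  qed
  also have "\<dots> = ?D u v - ?Z u v" by (subst sum.delta) (simp_all add: N_def)
  finally show ?thesis .
qed

lemma DZ_empty:
  fixes \<kappa> :: "'d::finite list \<Rightarrow> real"
  assumes k0: "\<kappa> [] = 0" and "u = [] \<or> v = []"
  shows "Gv \<kappa> [u, v] = Zf \<kappa> u v"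
  using assms by (auto simp: Gv_pair_nil_left Gv_pair_nil_right Zf_def)

theorem indep_alg:
  fixes \<mu> :: "'d::finite list \<Rightarrow> real"
  assumes m0: "\<mu> [] = 1"
  shows "(\<forall>u\<in>cls I. \<forall>v\<in>cls J. Gv \<mu> [u, v] = \<mu> u * \<mu> v) \<longleftrightarrow>
         (\<forall>u\<in>cls I. \<forall>v\<in>cls J. u \<noteq> [] \<longrightarrow> v \<noteq> [] \<longrightarrow> Gv (tlog \<mu>) [u, v] = 0)"
proof
  assume fac: "\<forall>u\<in>cls I. \<forall>v\<in>cls J. Gv \<mu> [u, v] = \<mu> u * \<mu> v"
  have all: "\<forall>u v. u \<in> cls I \<longrightarrow> v \<in> cls J \<longrightarrow> length u + length v = m \<longrightarrow> Gv (tlog \<mu>) [u, v] = Zf (tlog \<mu>) u v" for m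
  proof (induction m rule: less_induct)
    case (less m)
    show ?case
    proof (intro allI impI)
      fix u v assume u: "u \<in> cls I" and v: "v \<in> cls J" and m: "length u + length v = m"
      have "Gv \<mu> [u, v] - \<mu> u * \<mu> v = Gv (tlog \<mu>) [u, v] - Zf (tlog \<mu>) u v"
        by (rule lemmaB[of \<mu>, OF m0 u v]) (use less.IH m in blast)
      then show "Gv (tlog \<mu>) [u, v] = Zf (tlog \<mu>) u v" using fac u v by simp
    qed
  qed
  show "\<forall>u\<in>cls I. \<forall>v\<in>cls J. u \<noteq> [] \<longrightarrow> v \<noteq> [] \<longrightarrow> Gv (tlog \<mu>) [u, v] = 0"
    using all by (auto simp: Zf_def)
next
  assume van: "\<forall>u\<in>cls I. \<forall>v\<in>cls J. u \<noteq> [] \<longrightarrow> v \<noteq> [] \<longrightarrow> Gv (tlog \<mu>) [u, v] = 0"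
  have k0: "tlog \<mu> [] = 0" by (rule tlog_nil[of \<mu>, OF m0])
  have DZ: "Gv (tlog \<mu>) [u, v] = Zf (tlog \<mu>) u v" if "u \<in> cls I" "v \<in> cls J" for u v
  proof (cases "u = [] \<or> v = []")
    case True then show ?thesis by (rule DZ_empty[of "tlog \<mu>", OF k0])
  next
    case False then show ?thesis using van that by (simp add: Zf_def)
  qed
  show "\<forall>u\<in>cls I. \<forall>v\<in>cls J. Gv \<mu> [u, v] = \<mu> u * \<mu> v"
  proof (intro ballI)
    fix u v assume u: "u \<in> cls I" and v: "v \<in> cls J"
    have "Gv \<mu> [u, v] - \<mu> u * \<mu> v = Gv (tlog \<mu>) [u, v] - Zf (tlog \<mu>) u v"
      by (rule lemmaB[of \<mu>, OF m0 u v]) (rule DZ)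
    then show "Gv \<mu> [u, v] = \<mu> u * \<mu> v" using DZ[OF u v] by simp
  qed
qed

lemma cls_words_in: "cls I = insert [] (words_in I)"
  by (auto simp: cls_def words_in_def)

lemma integral_pair_prod:
  fixes f g :: "_ \<Rightarrow> real"
  assumes ps: "pair_sigma_finite M1 M2" and f: "integrable M1 f" and g: "integrable M2 g"
  shows "integrable (M1 \<Otimes>\<^sub>M M2) (\<lambda>(x, y). f x * g y)"
    and "integral\<^sup>L (M1 \<Otimes>\<^sub>M M2) (\<lambda>(x, y). f x * g y) = integral\<^sup>L M1 f * integral\<^sup>L M2 g"
proof -
  interpret pair_sigma_finite M1 M2 by (rule ps)
  have fm[measurable]: "f \<in> borel_measurable M1" using f by auto
  have gm[measurable]: "g \<in> borel_measurable M2" using g by auto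
  show int: "integrable (M1 \<Otimes>\<^sub>M M2) (\<lambda>(x, y). f x * g y)"
  proof (rule Fubini_integrable)
    show "(\<lambda>(x, y). f x * g y) \<in> borel_measurable (M1 \<Otimes>\<^sub>M M2)" by measurable
    have "integrable M1 (\<lambda>x. \<bar>f x\<bar> * (\<integral>y. \<bar>g y\<bar> \<partial>M2))"
      using f by (intro integrable_mult_left) auto
    moreover have "(\<lambda>x. \<integral>y. norm (case (x, y) of (x, y) \<Rightarrow> f x * g y) \<partial>M2) = (\<lambda>x. \<bar>f x\<bar> * (\<integral>y. \<bar>g y\<bar> \<partial>M2))"
      by (simp add: abs_mult)
    ultimately show "integrable M1 (\<lambda>x. \<integral>y. norm (case (x, y) of (x, y) \<Rightarrow> f x * g y) \<partial>M2)"
      by simp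
    show "AE x in M1. integrable M2 (\<lambda>y. case (x, y) of (x, y) \<Rightarrow> f x * g y)"
      using g by simp
  qed
  have "integral\<^sup>L (M1 \<Otimes>\<^sub>M M2) (\<lambda>(x, y). f x * g y) = (\<integral>x. (\<integral>y. f x * g y \<partial>M2) \<partial>M1)"
    using integral_fst[of "\<lambda>x y. f x * g y"] int by simp
  also have "\<dots> = integral\<^sup>L M1 f * integral\<^sup>L M2 g"
    by (simp add: integral_mult_left_zero)
  finally show "integral\<^sup>L (M1 \<Otimes>\<^sub>M M2) (\<lambda>(x, y). f x * g y) = integral\<^sup>L M1 f * integral\<^sup>L M2 g" .
qed

context sigsetup
begin

lemma tpair_shuffle_Gv: "tpair y (shuffle (ew \<tau>1) (ew \<tau>2)) = Gv y [\<tau>1, \<tau>2 :: 'd list]"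
proof -
  have "SL [\<tau>1, \<tau>2] = shuffle (ew \<tau>1) (ew \<tau>2)" by (simp add: SL_Cons shuffle_ew_nil)
  then show ?thesis by (metis tpair_SL)
qed

lemma Gv_mu_pair: "Gv mu [u, v] = integral\<^sup>L M (\<lambda>\<omega>. S \<omega> u * S \<omega> v)"
  by (simp add: Gv_mu)

lemma kcond_iff:
  "(\<forall>\<tau>1\<in>words_in I. \<forall>\<tau>2\<in>words_in J. tpair (tlog mu) (shuffle (ew \<tau>1) (ew \<tau>2)) = 0) \<longleftrightarrow>
   (\<forall>u\<in>cls I. \<forall>v\<in>cls J. u \<noteq> [] \<longrightarrow> v \<noteq> [] \<longrightarrow> Gv (tlog mu) [u, v] = 0)"
  by (auto simp: tpair_shuffle_Gv cls_words_in words_in_def)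

lemma fac_iff:
  "(\<forall>u\<in>cls I. \<forall>v\<in>cls J. Gv mu [u, v] = mu u * mu v) \<longleftrightarrow>
   (\<forall>\<tau>1\<in>words_in I. \<forall>\<tau>2\<in>words_in J. tpair (tlog mu) (shuffle (ew \<tau>1) (ew \<tau>2)) = 0)"
  unfolding kcond_iff by (rule indep_alg[of mu, OF mu_nil])

end

context sigsetup
begin

lemma X_meas: "(\<lambda>\<omega>. restrict (S \<omega>) A) \<in> measurable M (PiM A (\<lambda>_. borel))"
  by (rule measurable_restrict) (rule meas)

lemma mixfun_eq: "mixfun \<tau>1 \<tau>2 = (\<lambda>(y, z). (if \<tau>1 = [] then 1 else y \<tau>1) * (if \<tau>2 = [] then 1 else z \<tau>2))"
  by (auto simp: mixfun_def)

lemma g_meas: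
  assumes "\<tau> \<in> insert [] A"
  shows "(\<lambda>y. if \<tau> = [] then 1 else y \<tau>) \<in> borel_measurable (PiM A (\<lambda>_. borel :: real measure))"
proof (cases "\<tau> = []")
  case True then show ?thesis by simp
next
  case False
  then have "\<tau> \<in> A" using assms by simp
  then show ?thesis using False by (simp add: measurable_component_singleton)
qed

lemma g_comp:
  assumes "\<tau> \<in> insert [] A" "\<omega> \<in> space M"
  shows "(if \<tau> = [] then 1 else restrict (S \<omega>) A \<tau>) = S \<omega> \<tau>"
  using assms S_nil by auto

lemma distr_int:
  assumes \<tau>: "\<tau> \<in> insert [] A"
  shows "integrable (distr M (PiM A (\<lambda>_. borel)) (\<lambda>\<omega>. restrict (S \<omega>) A)) (\<lambda>y. if \<tau> = [] then 1 else y \<tau>)"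
    and "integral\<^sup>L (distr M (PiM A (\<lambda>_. borel)) (\<lambda>\<omega>. restrict (S \<omega>) A)) (\<lambda>y. if \<tau> = [] then 1 else y \<tau>) = mu \<tau>"
proof -
  have "integrable M (\<lambda>\<omega>. if \<tau> = [] then 1 else restrict (S \<omega>) A \<tau>)"
    using int_S[of \<tau>] by (rule Bochner_Integration.integrable_cong[THEN iffD1, OF refl, rotated]) (simp add: g_comp[OF \<tau>])
  then show "integrable (distr M (PiM A (\<lambda>_. borel)) (\<lambda>\<omega>. restrict (S \<omega>) A)) (\<lambda>y. if \<tau> = [] then 1 else y \<tau>)"
    by (subst integrable_distr_eq[OF X_meas g_meas[OF \<tau>]])
  have "integral\<^sup>L (distr M (PiM A (\<lambda>_. borel)) (\<lambda>\<omega>. restrict (S \<omega>) A)) (\<lambda>y. if \<tau> = [] then 1 else y \<tau>)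
     = integral\<^sup>L M (\<lambda>\<omega>. if \<tau> = [] then 1 else restrict (S \<omega>) A \<tau>)"
    by (rule integral_distr[OF X_meas g_meas[OF \<tau>]])
  also have "\<dots> = mu \<tau>" unfolding mu_def by (rule Bochner_Integration.integral_cong) (simp_all add: g_comp[OF \<tau>])
  finally show "integral\<^sup>L (distr M (PiM A (\<lambda>_. borel)) (\<lambda>\<omega>. restrict (S \<omega>) A)) (\<lambda>y. if \<tau> = [] then 1 else y \<tau>) = mu \<tau>" .
qed

lemma indep_imp_fac:
  assumes ind: "prob_space.indep_var M (PiM (words_in I) (\<lambda>_. borel)) (\<lambda>\<omega>. restrict (S \<omega>) (words_in I))
            (PiM (words_in J) (\<lambda>_. borel)) (\<lambda>\<omega>. restrict (S \<omega>) (words_in J))"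
  shows "\<forall>u\<in>cls I. \<forall>v\<in>cls J. Gv mu [u, v] = mu u * mu v"
proof (intro ballI)
  interpret prob_space M by (rule ps)
  fix u v assume u: "u \<in> cls I" and v: "v \<in> cls J"
  show "Gv mu [u, v] = mu u * mu v"
  proof (cases "u = [] \<or> v = []")
    case True then show ?thesis using mu_nil by (auto simp: Gv_pair_nil_left Gv_pair_nil_right)
  next
    case False
    then have uI: "u \<in> words_in I" and vJ: "v \<in> words_in J" using u v by (auto simp: cls_words_in)
    have "indep_var borel ((\<lambda>f. f u) \<circ> (\<lambda>\<omega>. restrict (S \<omega>) (words_in I))) borel ((\<lambda>f. f v) \<circ> (\<lambda>\<omega>. restrict (S \<omega>) (words_in J)))"
      by (rule indep_var_compose[OF ind]) (simp_all add: measurable_component_singleton uI vJ)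
    then have iv: "indep_var borel (\<lambda>\<omega>. S \<omega> u) borel (\<lambda>\<omega>. S \<omega> v)"
      using uI vJ by (simp add: o_def)
    have "Gv mu [u, v] = integral\<^sup>L M (\<lambda>\<omega>. S \<omega> u * S \<omega> v)" by (rule Gv_mu_pair)
    also have "\<dots> = mu u * mu v" unfolding mu_def by (rule indep_var_lebesgue_integral[OF iv int_S int_S])
    finally show ?thesis .
  qed
qed

lemma fac_imp_indep:
  assumes det: "\<forall>Q. prob_space Q \<longrightarrow>
             sets Q = sets (PiM (words_in I) (\<lambda>_. borel) \<Otimes>\<^sub>M PiM (words_in J) (\<lambda>_. borel)) \<longrightarrow>
             (\<forall>\<tau>1\<in>insert [] (words_in I). \<forall>\<tau>2\<in>insert [] (words_in J).
                integrable Q (mixfun \<tau>1 \<tau>2) \<and>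
                integral\<^sup>L Q (mixfun \<tau>1 \<tau>2) = integral\<^sup>L M (\<lambda>\<omega>. S \<omega> \<tau>1 * S \<omega> \<tau>2)) \<longrightarrow>
             Q = distr M (PiM (words_in I) (\<lambda>_. borel) \<Otimes>\<^sub>M PiM (words_in J) (\<lambda>_. borel))
                   (\<lambda>\<omega>. (restrict (S \<omega>) (words_in I), restrict (S \<omega>) (words_in J)))"
    and fac: "\<forall>u\<in>cls I. \<forall>v\<in>cls J. Gv mu [u, v] = mu u * mu v"
  shows "prob_space.indep_var M (PiM (words_in I) (\<lambda>_. borel)) (\<lambda>\<omega>. restrict (S \<omega>) (words_in I))
            (PiM (words_in J) (\<lambda>_. borel)) (\<lambda>\<omega>. restrict (S \<omega>) (words_in J))"
proof -
  interpret prob_space M by (rule ps)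
  let ?MI = "PiM (words_in I) (\<lambda>_. borel :: real measure)" and ?MJ = "PiM (words_in J) (\<lambda>_. borel :: real measure)"
  let ?X = "\<lambda>\<omega>. restrict (S \<omega>) (words_in I)" and ?Y = "\<lambda>\<omega>. restrict (S \<omega>) (words_in J)"
  let ?D1 = "distr M ?MI ?X" and ?D2 = "distr M ?MJ ?Y"
  have p1: "prob_space ?D1" by (rule prob_space_distr[OF X_meas])
  have p2: "prob_space ?D2" by (rule prob_space_distr[OF X_meas])
  have ps2: "pair_sigma_finite ?D1 ?D2" by (intro pair_sigma_finite.intro prob_space_imp_sigma_finite p1 p2)
  interpret PP: pair_prob_space ?D1 ?D2 by (simp add: pair_prob_space_def ps2 p1 p2)
  have pQ: "prob_space (?D1 \<Otimes>\<^sub>M ?D2)" by unfold_locales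
  have sQ: "sets (?D1 \<Otimes>\<^sub>M ?D2) = sets (?MI \<Otimes>\<^sub>M ?MJ)" by (rule sets_pair_measure_cong) simp_all
  have mom: "\<forall>\<tau>1\<in>insert [] (words_in I). \<forall>\<tau>2\<in>insert [] (words_in J).
                integrable (?D1 \<Otimes>\<^sub>M ?D2) (mixfun \<tau>1 \<tau>2) \<and>
                integral\<^sup>L (?D1 \<Otimes>\<^sub>M ?D2) (mixfun \<tau>1 \<tau>2) = integral\<^sup>L M (\<lambda>\<omega>. S \<omega> \<tau>1 * S \<omega> \<tau>2)"
  proof (intro ballI conjI)
    fix \<tau>1 \<tau>2 assume t1: "\<tau>1 \<in> insert [] (words_in I)" and t2: "\<tau>2 \<in> insert [] (words_in J)"
    note ip = integral_pair_prod[OF ps2 distr_int(1)[OF t1] distr_int(1)[OF t2]]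
    show "integrable (?D1 \<Otimes>\<^sub>M ?D2) (mixfun \<tau>1 \<tau>2)" unfolding mixfun_eq by (rule ip(1))
    have "integral\<^sup>L (?D1 \<Otimes>\<^sub>M ?D2) (mixfun \<tau>1 \<tau>2) = mu \<tau>1 * mu \<tau>2"
      unfolding mixfun_eq ip(2) distr_int(2)[OF t1] distr_int(2)[OF t2] ..
    also have "\<dots> = Gv mu [\<tau>1, \<tau>2]" using fac t1 t2 unfolding cls_words_in by metis
    also have "\<dots> = integral\<^sup>L M (\<lambda>\<omega>. S \<omega> \<tau>1 * S \<omega> \<tau>2)" by (rule Gv_mu_pair)
    finally show "integral\<^sup>L (?D1 \<Otimes>\<^sub>M ?D2) (mixfun \<tau>1 \<tau>2) = integral\<^sup>L M (\<lambda>\<omega>. S \<omega> \<tau>1 * S \<omega> \<tau>2)" .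
  qed
  have eq: "?D1 \<Otimes>\<^sub>M ?D2 = distr M (?MI \<Otimes>\<^sub>M ?MJ) (\<lambda>\<omega>. (?X \<omega>, ?Y \<omega>))"
    using det pQ sQ mom by blast
  show ?thesis
    unfolding indep_var_distribution_eq using eq X_meas[of "words_in I"] X_meas[of "words_in J"] by simp
qed

end

theorem theorem3p6:
  fixes M :: "'a measure" and p :: real
    and S :: "'a \<Rightarrow> 'd::finite list \<Rightarrow> real"
  assumes "prob_space M"
    and "1 \<le> p"
    and "\<And>w. (\<lambda>\<omega>. S \<omega> w) \<in> borel_measurable M"
    and "\<And>\<omega>. \<omega> \<in> space M \<Longrightarrow> S \<omega> \<in> wg_signatures p"
    and "\<And>f. tfin f \<Longrightarrow> integrable M (\<lambda>\<omega>. tpair (S \<omega>) f)"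
  defines "\<mu> \<equiv> (\<lambda>w. integral\<^sup>L M (\<lambda>\<omega>. S \<omega> w))"
  defines "\<kappa> \<equiv> tlog \<mu>"
  shows
    "(\<forall>taus. taus \<noteq> [] \<and> (\<forall>\<tau>\<in>set taus. \<tau> \<noteq> []) \<longrightarrow>
        tpair \<kappa> (shuffle_list (map ew taus)) =
        (\<Sum>a\<in>Orp (wposet taus) wle.
           (-1) ^ (card a - 1) * real (opfact (wposet taus) wle a) / real (card a)
           * genmom M S taus a))
   \<and> (\<forall>\<tau>. \<tau> \<noteq> [] \<longrightarrow>
        tpair \<mu> (ew \<tau>) =
        (\<Sum>a\<in>Orp (wposet [\<tau>]) wle.
           1 / fact (card a) * (\<Prod>B\<in>a. tpair \<kappa> (ew (blockword [\<tau>] B 0)))))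
   \<and> (\<forall>I J :: 'd set.
        (\<forall>Q. prob_space Q \<longrightarrow>
             sets Q = sets (PiM (words_in I) (\<lambda>_. borel) \<Otimes>\<^sub>M PiM (words_in J) (\<lambda>_. borel)) \<longrightarrow>
             (\<forall>\<tau>1\<in>insert [] (words_in I). \<forall>\<tau>2\<in>insert [] (words_in J).
                integrable Q (mixfun \<tau>1 \<tau>2) \<and>
                integral\<^sup>L Q (mixfun \<tau>1 \<tau>2) = integral\<^sup>L M (\<lambda>\<omega>. S \<omega> \<tau>1 * S \<omega> \<tau>2)) \<longrightarrow>
             Q = distr M (PiM (words_in I) (\<lambda>_. borel) \<Otimes>\<^sub>M PiM (words_in J) (\<lambda>_. borel))
                   (\<lambda>\<omega>. (restrict (S \<omega>) (words_in I), restrict (S \<omega>) (words_in J))))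
        \<longrightarrow>
        (prob_space.indep_var M
            (PiM (words_in I) (\<lambda>_. borel)) (\<lambda>\<omega>. restrict (S \<omega>) (words_in I))
            (PiM (words_in J) (\<lambda>_. borel)) (\<lambda>\<omega>. restrict (S \<omega>) (words_in J))
         \<longleftrightarrow> (\<forall>\<tau>1\<in>words_in I. \<forall>\<tau>2\<in>words_in J.
                 tpair \<kappa> (shuffle (ew \<tau>1) (ew \<tau>2)) = 0)))"
proof -
  have SS: "sigsetup M p S" unfolding sigsetup_def using assms(1,3,4,5) by blast
  interpret sigsetup M p S by (rule SS)
  have mueq: "\<mu> = mu" by (simp add: \<mu>_def mu_def)
  have keq: "\<kappa> = tlog mu" by (simp add: \<kappa>_def mueq)
  show ?thesis
  proof (intro conjI allI impI)
    fix taus :: "'d list list"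
    assume "taus \<noteq> [] \<and> (\<forall>\<tau>\<in>set taus. \<tau> \<noteq> [])"
    then show "tpair \<kappa> (shuffle_list (map ew taus)) =
        (\<Sum>a\<in>Orp (wposet taus) wle.
           (-1) ^ (card a - 1) * real (opfact (wposet taus) wle a) / real (card a)
           * genmom M S taus a)"
      unfolding keq by (intro part1) auto
  next
    fix \<tau> :: "'d list"
    assume "\<tau> \<noteq> []"
    then show "tpair \<mu> (ew \<tau>) =
        (\<Sum>a\<in>Orp (wposet [\<tau>]) wle.
           1 / fact (card a) * (\<Prod>B\<in>a. tpair \<kappa> (ew (blockword [\<tau>] B 0))))"
      unfolding keq mueq by (rule part2_alg[of mu, OF mu_nil])
  next
    fix I J :: "'d set"
    assume det: "\<forall>Q. prob_space Q \<longrightarrow>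
             sets Q = sets (PiM (words_in I) (\<lambda>_. borel) \<Otimes>\<^sub>M PiM (words_in J) (\<lambda>_. borel)) \<longrightarrow>
             (\<forall>\<tau>1\<in>insert [] (words_in I). \<forall>\<tau>2\<in>insert [] (words_in J).
                integrable Q (mixfun \<tau>1 \<tau>2) \<and>
                integral\<^sup>L Q (mixfun \<tau>1 \<tau>2) = integral\<^sup>L M (\<lambda>\<omega>. S \<omega> \<tau>1 * S \<omega> \<tau>2)) \<longrightarrow>
             Q = distr M (PiM (words_in I) (\<lambda>_. borel) \<Otimes>\<^sub>M PiM (words_in J) (\<lambda>_. borel))
                   (\<lambda>\<omega>. (restrict (S \<omega>) (words_in I), restrict (S \<omega>) (words_in J)))"
    show "prob_space.indep_var M
            (PiM (words_in I) (\<lambda>_. borel)) (\<lambda>\<omega>. restrict (S \<omega>) (words_in I))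
            (PiM (words_in J) (\<lambda>_. borel)) (\<lambda>\<omega>. restrict (S \<omega>) (words_in J))
         \<longleftrightarrow> (\<forall>\<tau>1\<in>words_in I. \<forall>\<tau>2\<in>words_in J.
                 tpair \<kappa> (shuffle (ew \<tau>1) (ew \<tau>2)) = 0)"
      unfolding keq fac_iff[symmetric]
      using indep_imp_fac fac_imp_indep[OF det] by blast
  qed
qed

end
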